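(* Let $S$ be a formula such that $F_n(u,v)\in S$ for all $u,v\in S$ and $n\ge0$. Then $\mathbb{C}[D]\otimes S$, with the extended products and the operator $D$, is a vertex Lie superalgebra if and only if $F_n=0$ for all $n\ge1$ and $F_0:S\otimes S\to S$ is the bracket of a Lie superalgebra structure on $S$.
   Context: All spaces over $\mathbb{C}$; $\mathbb{N}=\{0,1,2,\dots\}$; $\varepsilon_{u,v}=(-1)^{|u||v|}$. A formula is a $\mathbb{Z}_2$-graded space $S$ with parity-preserving linear maps $F_n:S\otimes S\to\mathbb{C}[D]\otimes S$ ($n\in\mathbb{N}$; $\mathbb{C}[D]$, formal polynomials in $D$, is even) with $F_n(u,v)=0$ for $n$ large; write $u_nv=F_n(u,v)$, identify $S=1\otimes S$, and let $D(D^k\otimes u)=D^{k+1}\otimes u$. The products extend uniquely to bilinear products $A_nB$ ($n\in\mathbb{N}$) on $\mathbb{C}[D]\otimes S$ with $(DA)_nB=-nA_{n-1}B$ and $D(A_nB)=(DA)_nB+A_n(DB)$; explicitly $\sum_{n\ge0}(P(D)u)_n(Q(D)v)z^{-n-1}=P(\frac{d}{dz})Q(D-\frac{d}{dz})\sum_{n\ge0}(u_nv)z^{-n-1}$ for $u,v\in S$ and polynomials $P,Q$. A vertex Lie superalgebra is a $\mathbb{Z}_2$-graded space $U$ with an even operator $D$ and bilinear products $u_nv$ ($n\in\mathbb{N}$) such that for homogeneous $u,v,w$: $u_nv=0$ for $n$ large; $|u_nv|=|u|+|v|$; $(Du)_nv=-nu_{n-1}v$ (read as $0$ for $n=0$)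 and $D(u_nv)=(Du)_nv+u_n(Dv)$; $u_nv=-\varepsilon_{u,v}\sum_{k\ge0}(-1)^{n+k}\frac{D^k}{k!}v_{n+k}u$; and for all $k,m,n\in\mathbb{N}$, $\sum_{i\ge0}(-1)^i\binom{k}{i}(u_{m+k-i}(v_{n+i}w)-\varepsilon_{u,v}(-1)^kv_{n+k-i}(u_{m+i}w))=\sum_{i\ge0}\binom{m}{i}(u_{k+i}v)_{m+n-i}w$. *)

theory Defs
  imports Complex_Main "HOL-Computational_Algebra.Polynomial"
begin

text \<open>Complex vector spaces are modelled as complex modules: an abelian group type
  together with a scalar multiplication sc satisfying the module axioms.  Parities are booleans (False = even, True = odd).\<close>

definition graded_space :: "(complex \<Rightarrow> 'a::ab_group_add \<Rightarrow> 'a) \<Rightarrow> 'a set \<Rightarrow> 'a set \<Rightarrow> bool" where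
  "graded_space sc V0 V1 \<longleftrightarrow> module sc \<and> module.subspace sc V0 \<and> module.subspace sc V1
     \<and> V0 \<inter> V1 = {0} \<and> (\<forall>x. \<exists>a\<in>V0. \<exists>b\<in>V1. x = a + b)"

definition par :: "'a set \<Rightarrow> 'a set \<Rightarrow> bool \<Rightarrow> 'a set" where
  "par V0 V1 p = (if p then V1 else V0)"

definition eps :: "bool \<Rightarrow> bool \<Rightarrow> complex" where
  "eps p q = (if p \<and> q then -1 else 1)"

definition bilinear_map :: "(complex \<Rightarrow> 'a::ab_group_add \<Rightarrow> 'a) \<Rightarrow> (complex \<Rightarrow> 'b::ab_group_add \<Rightarrow> 'b)
     \<Rightarrow> ('a \<Rightarrow> 'a \<Rightarrow> 'b) \<Rightarrow> bool" where
  "bilinear_map sc sc' f \<longleftrightarrow>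
     (\<forall>x y z. f (x + y) z = f x z + f y z) \<and> (\<forall>x y z. f z (x + y) = f z x + f z y)
   \<and> (\<forall>c x y. f (sc c x) y = sc' c (f x y)) \<and> (\<forall>c x y. f x (sc c y) = sc' c (f x y))"

text \<open>The element sum_k D^k \<otimes> s_k is the polynomial with coefficients s_k.\<close>

definition pscale :: "(complex \<Rightarrow> 'a::ab_group_add \<Rightarrow> 'a) \<Rightarrow> complex \<Rightarrow> 'a poly \<Rightarrow> 'a poly" where
  "pscale sc c A = map_poly (sc c) A"

definition Dop :: "'a::zero poly \<Rightarrow> 'a poly" where
  "Dop A = pCons 0 A"

text \<open>C[D] is even, so the grading of C[D] \<otimes> S is coefficientwise.\<close>
definition polypar :: "'a::zero set \<Rightarrow> 'a set \<Rightarrow> bool \<Rightarrow> 'a poly set" where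
  "polypar S0 S1 p = {A. \<forall>k. coeff A k \<in> par S0 S1 p}"

definition is_formula :: "(complex \<Rightarrow> 'a::ab_group_add \<Rightarrow> 'a) \<Rightarrow> 'a set \<Rightarrow> 'a set
     \<Rightarrow> (nat \<Rightarrow> 'a \<Rightarrow> 'a \<Rightarrow> 'a poly) \<Rightarrow> bool" where
  "is_formula sc S0 S1 F \<longleftrightarrow> graded_space sc S0 S1
     \<and> (\<forall>n. bilinear_map sc (pscale sc) (F n))
     \<and> (\<forall>n p q u v. u \<in> par S0 S1 p \<longrightarrow> v \<in> par S0 S1 q \<longrightarrow> F n u v \<in> polypar S0 S1 (p \<noteq> q))
     \<and> (\<forall>u v. \<exists>N. \<forall>n\<ge>N. F n u v = 0)"

text \<open>The extended products (D^a u)_n (D^b v), computed from the generating-function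
  formula  P(d/dz) Q(D - d/dz) sum_n (u_n v) z^(-n-1)  with P = x^a, Q = x^b:
  (D^a u)_n (D^b v) = (-1)^a sum_{j \<le> b, a+j \<le> n} (b choose j) n!/(n-a-j)! D^(b-j) (u_{n-a-j} v),
  extended bilinearly.\<close>
definition extprod :: "(complex \<Rightarrow> 'a::ab_group_add \<Rightarrow> 'a) \<Rightarrow> (nat \<Rightarrow> 'a \<Rightarrow> 'a \<Rightarrow> 'a poly)
     \<Rightarrow> nat \<Rightarrow> 'a poly \<Rightarrow> 'a poly \<Rightarrow> 'a poly" where
  "extprod sc F n A B =
     (\<Sum>a\<le>degree A. \<Sum>b\<le>degree B. \<Sum>j\<le>b.
        if a + j \<le> n then
          pscale sc ((-1) ^ a * of_nat (b choose j) * of_nat (fact n) / of_nat (fact (n - a - j)))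
            ((Dop ^^ (b - j)) (F (n - a - j) (coeff A a) (coeff B b)))
        else 0)"

definition vertex_Lie_superalgebra :: "(complex \<Rightarrow> 'b::ab_group_add \<Rightarrow> 'b) \<Rightarrow> 'b set \<Rightarrow> 'b set
     \<Rightarrow> ('b \<Rightarrow> 'b) \<Rightarrow> (nat \<Rightarrow> 'b \<Rightarrow> 'b \<Rightarrow> 'b) \<Rightarrow> bool" where
  "vertex_Lie_superalgebra sc U0 U1 D pr \<longleftrightarrow> graded_space sc U0 U1
     \<and> (\<forall>x y. D (x + y) = D x + D y) \<and> (\<forall>c x. D (sc c x) = sc c (D x))
     \<and> (\<forall>p x. x \<in> par U0 U1 p \<longrightarrow> D x \<in> par U0 U1 p)
     \<and> (\<forall>n. bilinear_map sc sc (pr n))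
     \<and> (\<forall>p q u v. u \<in> par U0 U1 p \<longrightarrow> v \<in> par U0 U1 q \<longrightarrow>
          (\<exists>N. \<forall>n\<ge>N. pr n u v = 0)
        \<and> (\<forall>n. pr n u v \<in> par U0 U1 (p \<noteq> q))
        \<and> pr 0 (D u) v = 0
        \<and> (\<forall>n. pr (Suc n) (D u) v = - sc (of_nat (Suc n)) (pr n u v))
        \<and> (\<forall>n. D (pr n u v) = pr n (D u) v + pr n u (D v))
        \<and> (\<forall>n M. (\<forall>k\<ge>M. pr (n + k) v u = 0) \<longrightarrow>
             pr n u v = - sc (eps p q)
               (\<Sum>k<M. sc ((-1) ^ (n + k) / of_nat (fact k)) ((D ^^ k) (pr (n + k) v u))))
        \<and> (\<forall>r w k m n. w \<in> par U0 U1 r \<longrightarrow>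
             (\<Sum>i\<le>k. sc ((-1) ^ i * of_nat (k choose i))
                 (pr (m + k - i) u (pr (n + i) v w)
                  - sc (eps p q * (-1) ^ k) (pr (n + k - i) v (pr (m + i) u w))))
             = (\<Sum>i\<le>m. sc (of_nat (m choose i)) (pr (m + n - i) (pr (k + i) u v) w))))"

definition Lie_superalgebra :: "(complex \<Rightarrow> 'a::ab_group_add \<Rightarrow> 'a) \<Rightarrow> 'a set \<Rightarrow> 'a set
     \<Rightarrow> ('a \<Rightarrow> 'a \<Rightarrow> 'a) \<Rightarrow> bool" where
  "Lie_superalgebra sc S0 S1 br \<longleftrightarrow> graded_space sc S0 S1 \<and> bilinear_map sc sc br
     \<and> (\<forall>p q r u v w. u \<in> par S0 S1 p \<longrightarrow> v \<in> par S0 S1 q \<longrightarrow> w \<in> par S0 S1 r \<longrightarrow>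
          br u v \<in> par S0 S1 (p \<noteq> q)
        \<and> br u v = - sc (eps p q) (br v u)
        \<and> br u (br v w) = br (br u v) w + sc (eps p q) (br v (br u w)))"

end

theory Submission
  imports Defs
begin

locale pvla = module sc for sc :: "complex \<Rightarrow> 'b::ab_group_add \<Rightarrow> 'b" +
  fixes D :: "'b \<Rightarrow> 'b" and pr :: "nat \<Rightarrow> 'b \<Rightarrow> 'b \<Rightarrow> 'b"
  assumes D_add: "D (x + y) = D x + D y"
    and D_sc: "D (sc c x) = sc c (D x)"
    and pr_addL: "pr n (x + y) z = pr n x z + pr n y z"
    and pr_addR: "pr n z (x + y) = pr n z x + pr n z y"
    and pr_scL: "pr n (sc c x) y = sc c (pr n x y)"
    and pr_scR: "pr n x (sc c y) = sc c (pr n x y)"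
    and pr_D: "pr j (D u) v = - sc (of_nat j) (pr (j - 1) u v)"
    and D_pr: "D (pr n u v) = pr n (D u) v + pr n u (D v)"
begin

lemma D_zero[simp]: "D 0 = 0"
  using D_add[of 0 0] by simp
lemma D_minus: "D (- x) = - D x"
  using D_add[of x "-x"] by (intro minus_unique[symmetric]) simp
lemma D_diff: "D (x - y) = D x - D y"
  using D_add[of x "-y"] D_minus[of y] by simp
lemma D_sum: "D (sum f A) = (\<Sum>a\<in>A. D (f a))"
  by (induct A rule: infinite_finite_induct) (simp_all add: D_add)
lemma pr_zeroL[simp]: "pr n 0 y = 0"
  using pr_addL[of n 0 0 y] by simp
lemma pr_zeroR[simp]: "pr n y 0 = 0"
  using pr_addR[of n y 0 0] by simp
lemma pr_minusL: "pr n (- x) y = - pr n x y"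
  using pr_addL[of n x "-x" y] by (intro minus_unique[symmetric]) simp
lemma pr_minusR: "pr n y (- x) = - pr n y x"
  using pr_addR[of n y x "-x"] by (intro minus_unique[symmetric]) simp
lemma pr_diffL: "pr n (x - x') y = pr n x y - pr n x' y"
  using pr_addL[of n x "-x'" y] pr_minusL by simp
lemma pr_diffR: "pr n y (x - x') = pr n y x - pr n y x'"
  using pr_addR[of n y x "-x'"] pr_minusR by simp
lemma pr_sumL: "pr n (sum f A) y = (\<Sum>a\<in>A. pr n (f a) y)"
  by (induct A rule: infinite_finite_induct) (simp_all add: pr_addL)
lemma pr_sumR: "pr n y (sum f A) = (\<Sum>a\<in>A. pr n y (f a))"
  by (induct A rule: infinite_finite_induct) (simp_all add: pr_addR)

lemma pr_Dsc: "pr j (D u) v = sc (- of_nat j) (pr (j - 1) u v)"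
  using pr_D by simp

lemma pr_Dsc_sc: "sc c (pr j (D u) x) = sc (- (c * of_nat j)) (pr (j - 1) u x)"
  by (simp add: pr_D)

lemma pr_uDv: "pr j u (D v) = D (pr j u v) + sc (of_nat j) (pr (j - 1) u v)"
  using D_pr[of j u v] pr_D[of j u v] by (simp add: algebra_simps)

lemma sum_sc_combine:
  "(\<Sum>i\<in>A. sc (f i) (T i)) + (\<Sum>i\<in>A. sc (g i) (T i)) = (\<Sum>i\<in>A. sc (f i + g i) (T i))"
  by (simp add: sum.distrib scale_left_distrib)

lemma sc_sum_sc: "sc c (\<Sum>i\<in>A. sc (f i) (T i)) = (\<Sum>i\<in>A. sc (c * f i) (T i))"
  by (simp add: scale_sum_right)

definition LU where
  "LU u v w k m n = (\<Sum>i\<le>k. sc ((-1)^i * of_nat (k choose i)) (pr (m+k-i) u (pr (n+i) v w)))"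
definition LV where
  "LV u v w k m n = (\<Sum>i\<le>k. sc ((-1)^i * of_nat (k choose i)) (pr (n+k-i) v (pr (m+i) u w)))"
definition RR where
  "RR u v w k m n = (\<Sum>i\<le>m. sc (of_nat (m choose i)) (pr (m+n-i) (pr (k+i) u v) w))"
definition JJ where
  "JJ s u v w k m n = LU u v w k m n - sc (s * (-1)^k) (LV u v w k m n) - RR u v w k m n"

lemma JJ_eq:
  "(\<Sum>i\<le>k. sc ((-1) ^ i * of_nat (k choose i))
                 (pr (m + k - i) u (pr (n + i) v w)
                  - sc (s * (-1) ^ k) (pr (n + k - i) v (pr (m + i) u w))))
   - (\<Sum>i\<le>m. sc (of_nat (m choose i)) (pr (m + n - i) (pr (k + i) u v) w)) = JJ s u v w k m n"
  unfolding JJ_def LU_def LV_def RR_def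
  by (simp add: scale_right_diff_distrib sum_subtractf scale_sum_right mult.commute mult.left_commute)


lemma binom_k1: "i \<le> k \<Longrightarrow> (of_nat k * of_nat (k - 1 choose i) :: complex) = of_nat (k - i) * of_nat (k choose i)"
proof -
  have "k * (k - 1 choose i) = (k - i) * (k choose i)" using binomial_absorb_comp[of k i] by simp
  then show ?thesis by (metis of_nat_mult)
qed

lemma binom_k2: "(of_nat k * of_nat (k - 1 choose i) :: complex) = of_nat (Suc i) * of_nat (k choose Suc i)"
proof -
  have "k * (k - 1 choose i) = Suc i * (k choose Suc i)" using binomial_absorption[of i k] by simp
  then show ?thesis by (metis of_nat_mult)
qed

lemma sum_zero_ext: "sum f {..k} = sum f {..Suc k}" if "f (Suc k) = 0" for f :: "nat \<Rightarrow> 'b"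
  using that by simp

lemma LU_Du: "LU (D u) v w k m n = - sc (of_nat m) (LU u v w k (m-1) n) - sc (of_nat k) (LU u v w (k-1) m n)"
proof -
  define T where "T i = pr (m+k-i-1) u (pr (n+i) v w)" for i
  have 1: "LU (D u) v w k m n = (\<Sum>i\<le>k. sc (- ((-1)^i * of_nat (k choose i) * of_nat (m+k-i))) (T i))"
    unfolding LU_def T_def by (intro sum.cong refl) (simp add: pr_Dsc_sc)
  have 2: "sc (of_nat m) (LU u v w k (m-1) n) = (\<Sum>i\<le>k. sc (of_nat m * ((-1)^i * of_nat (k choose i))) (T i))"
  proof (cases m)
    case 0 then show ?thesis by simp
  next
    case (Suc m')
    then show ?thesis unfolding LU_def T_def sc_sum_sc
      by (intro sum.cong) auto
  qed
  have 3: "sc (of_nat k) (LU u v w (k-1) m n) = (\<Sum>i\<le>k. sc (of_nat k * ((-1)^i * of_nat (k - 1 choose i))) (T i))"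
  proof (cases k)
    case 0 then show ?thesis by simp
  next
    case (Suc k')
    have "sc (of_nat k) (LU u v w (k-1) m n) = (\<Sum>i\<le>k'. sc (of_nat k * ((-1)^i * of_nat (k' choose i))) (T i))"
      unfolding LU_def T_def sc_sum_sc using Suc by (intro sum.cong) auto
    also have "\<dots> = (\<Sum>i\<le>Suc k'. sc (of_nat k * ((-1)^i * of_nat (k' choose i))) (T i))"
      by (rule sum_zero_ext) (simp add: binomial_eq_0)
    finally show ?thesis using Suc by simp
  qed
  have "- sc (of_nat m) (LU u v w k (m-1) n) - sc (of_nat k) (LU u v w (k-1) m n)
     = (\<Sum>i\<le>k. sc (- (of_nat m * ((-1)^i * of_nat (k choose i))) - of_nat k * ((-1)^i * of_nat (k - 1 choose i))) (T i))"
    unfolding 2 3 by (simp add: sum_subtractf[symmetric] sum_negf[symmetric] scale_left_diff_distrib)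
  also have "\<dots> = (\<Sum>i\<le>k. sc (- ((-1)^i * of_nat (k choose i) * of_nat (m+k-i))) (T i))"
  proof (intro sum.cong refl arg_cong2[where f=sc])
    fix i assume "i \<in> {..k}"
    then have ik: "i \<le> k" by simp
    have "of_nat k * ((-1)^i * of_nat (k - 1 choose i)) = (-1)^i * (of_nat k * of_nat (k - 1 choose i) :: complex)"
      by simp
    also have "\<dots> = (-1)^i * (of_nat (k - i) * of_nat (k choose i))" using binom_k1[OF ik] by simp
    finally have e: "of_nat k * ((-1)^i * of_nat (k - 1 choose i)) = (-1)^i * (of_nat (k - i) * of_nat (k choose i) :: complex)" .
    have "(of_nat (m + k - i) :: complex) = of_nat m + of_nat (k - i)" using ik by simp
    then show "- (of_nat m * ((-1)^i * of_nat (k choose i))) - of_nat k * ((-1)^i * of_nat (k - 1 choose i))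
       = - ((-1)^i * of_nat (k choose i) * of_nat (m+k-i) :: complex)"
      unfolding e by (simp add: algebra_simps)
  qed
  finally show ?thesis using 1 by simp
qed

lemma sc_pr_inner_D: "sc c (pr j v (pr l (D u) w)) = sc (- (c * of_nat l)) (pr j v (pr (l - 1) u w))"
  by (simp add: pr_D pr_minusR pr_scR)

lemma LV_Du: "LV (D u) v w k m n = - sc (of_nat m) (LV u v w k (m-1) n) + sc (of_nat k) (LV u v w (k-1) m n)"
proof -
  define T where "T i = pr (n+k-i) v (pr (m+i-1) u w)" for i
  have 1: "LV (D u) v w k m n = (\<Sum>i\<le>k. sc (- ((-1)^i * of_nat (k choose i) * of_nat (m+i))) (T i))"
    unfolding LV_def T_def by (intro sum.cong refl) (simp add: sc_pr_inner_D)
  have 2: "sc (of_nat m) (LV u v w k (m-1) n) = (\<Sum>i\<le>k. sc (of_nat m * ((-1)^i * of_nat (k choose i))) (T i))"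
  proof (cases m)
    case 0 then show ?thesis by simp
  next
    case (Suc m')
    then show ?thesis unfolding LV_def T_def sc_sum_sc
      by (intro sum.cong) auto
  qed
  have 3: "sc (of_nat k) (LV u v w (k-1) m n) = (\<Sum>i\<le>k. sc (- ((-1)^i * of_nat i * of_nat (k choose i))) (T i))"
  proof (cases k)
    case 0 then show ?thesis by simp
  next
    case (Suc k')
    have "(\<Sum>i\<le>k. sc (- ((-1)^i * of_nat i * of_nat (k choose i))) (T i))
       = (\<Sum>i\<le>k'. sc (- ((-1)^(Suc i) * of_nat (Suc i) * of_nat (k choose Suc i))) (T (Suc i)))"
      unfolding Suc sum.atMost_Suc_shift by simp
    also have "\<dots> = (\<Sum>i\<le>k'. sc (of_nat k * ((-1)^i * of_nat (k' choose i))) (pr (n+k'-i) v (pr (m+i) u w)))"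
    proof (intro sum.cong refl arg_cong2[where f=sc])
      fix i
      show "T (Suc i) = pr (n+k'-i) v (pr (m+i) u w)" unfolding T_def Suc by simp
      have e: "(of_nat (Suc i) * of_nat (k choose Suc i) :: complex) = of_nat k * of_nat (k' choose i)"
        using binom_k2[of k i] Suc by simp
      have "- ((-1)^(Suc i) * of_nat (Suc i) * of_nat (k choose Suc i)) = (-1)^i * (of_nat (Suc i) * of_nat (k choose Suc i) :: complex)"
        by (simp only: power_Suc mult_minus1 minus_minus mult.assoc mult_minus_left mult_1_left)
      also have "\<dots> = (-1)^i * (of_nat k * of_nat (k' choose i))" by (simp only: e)
      finally show "- ((-1)^(Suc i) * of_nat (Suc i) * of_nat (k choose Suc i)) = (of_nat k * ((-1)^i * of_nat (k' choose i)) :: complex)"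
        by (simp add: algebra_simps)
    qed
    also have "\<dots> = sc (of_nat k) (LV u v w (k-1) m n)"
      unfolding LV_def sc_sum_sc Suc by simp
    finally show ?thesis by simp
  qed
  show ?thesis unfolding 1 2 3
    by (simp add: sum_subtractf[symmetric] sum_negf[symmetric] sum.distrib[symmetric] scale_left_distrib[symmetric]
        algebra_simps)
qed

lemma sc_pr_outer_D: "sc c (pr l (pr j (D u) v) w) = sc (- (c * of_nat j)) (pr l (pr (j - 1) u v) w)"
  by (simp add: pr_D pr_minusL pr_scL)

lemma RR_Du: "RR (D u) v w k m n = - sc (of_nat m) (RR u v w k (m-1) n) - sc (of_nat k) (RR u v w (k-1) m n)"
proof -
  define T where "T i = pr (m+n-i) (pr (k+i-1) u v) w" for i
  have 1: "RR (D u) v w k m n = (\<Sum>i\<le>m. sc (- (of_nat (m choose i) * of_nat (k+i))) (T i))"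
    unfolding RR_def T_def by (intro sum.cong refl) (simp add: sc_pr_outer_D)
  have 2: "sc (of_nat m) (RR u v w k (m-1) n) = (\<Sum>i\<le>m. sc (of_nat i * of_nat (m choose i)) (T i))"
  proof (cases m)
    case 0 then show ?thesis by simp
  next
    case (Suc m')
    have "(\<Sum>i\<le>m. sc (of_nat i * of_nat (m choose i)) (T i))
       = (\<Sum>i\<le>m'. sc (of_nat (Suc i) * of_nat (m choose Suc i)) (T (Suc i)))"
      unfolding Suc sum.atMost_Suc_shift by simp
    also have "\<dots> = (\<Sum>i\<le>m'. sc (of_nat m * of_nat (m' choose i)) (pr (m'+n-i) (pr (k+i) u v) w))"
    proof (intro sum.cong refl arg_cong2[where f=sc])
      fix i
      show "T (Suc i) = pr (m'+n-i) (pr (k+i) u v) w" unfolding T_def Suc by simp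
      show "(of_nat (Suc i) * of_nat (m choose Suc i) :: complex) = of_nat m * of_nat (m' choose i)"
        using binom_k2[of m i] Suc by simp
    qed
    also have "\<dots> = sc (of_nat m) (RR u v w k (m-1) n)"
      unfolding RR_def sc_sum_sc Suc by simp
    finally show ?thesis by simp
  qed
  have 3: "sc (of_nat k) (RR u v w (k-1) m n) = (\<Sum>i\<le>m. sc (of_nat k * of_nat (m choose i)) (T i))"
  proof (cases k)
    case 0 then show ?thesis by simp
  next
    case (Suc k')
    then show ?thesis unfolding RR_def T_def sc_sum_sc
      by (intro sum.cong) auto
  qed
  show ?thesis unfolding 1 2 3
    by (simp add: sum_subtractf[symmetric] sum_negf[symmetric] sum.distrib[symmetric] scale_left_distrib[symmetric]
        algebra_simps)
qed

lemma JJ_Du: "JJ s (D u) v w k m n = - sc (of_nat m) (JJ s u v w k (m-1) n) - sc (of_nat k) (JJ s u v w (k-1) m n)"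
proof (cases k)
  case 0
  then show ?thesis unfolding JJ_def LU_Du LV_Du RR_Du
    by (simp add: algebra_simps)
next
  case (Suc k')
  then have e: "(-1::complex)^(k-1) = - ((-1)^k)" by simp
  show ?thesis unfolding JJ_def LU_Du LV_Du RR_Du e
    by (simp add: algebra_simps)
qed

lemma LU_Dv: "LU u (D v) w k m n = - sc (of_nat n) (LU u v w k m (n-1)) + sc (of_nat k) (LU u v w (k-1) m n)"
proof -
  define T where "T i = pr (m+k-i) u (pr (n+i-1) v w)" for i
  have 1: "LU u (D v) w k m n = (\<Sum>i\<le>k. sc (- ((-1)^i * of_nat (k choose i) * of_nat (n+i))) (T i))"
    unfolding LU_def T_def by (intro sum.cong refl) (simp add: sc_pr_inner_D)
  have 2: "sc (of_nat n) (LU u v w k m (n-1)) = (\<Sum>i\<le>k. sc (of_nat n * ((-1)^i * of_nat (k choose i))) (T i))"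
  proof (cases n)
    case 0 then show ?thesis by simp
  next
    case (Suc n')
    then show ?thesis unfolding LU_def T_def sc_sum_sc
      by (intro sum.cong) auto
  qed
  have 3: "sc (of_nat k) (LU u v w (k-1) m n) = (\<Sum>i\<le>k. sc (- ((-1)^i * of_nat i * of_nat (k choose i))) (T i))"
  proof (cases k)
    case 0 then show ?thesis by simp
  next
    case (Suc k')
    have "(\<Sum>i\<le>k. sc (- ((-1)^i * of_nat i * of_nat (k choose i))) (T i))
       = (\<Sum>i\<le>k'. sc (- ((-1)^(Suc i) * of_nat (Suc i) * of_nat (k choose Suc i))) (T (Suc i)))"
      unfolding Suc sum.atMost_Suc_shift by simp
    also have "\<dots> = (\<Sum>i\<le>k'. sc (of_nat k * ((-1)^i * of_nat (k' choose i))) (pr (m+k'-i) u (pr (n+i) v w)))"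
    proof (intro sum.cong refl arg_cong2[where f=sc])
      fix i
      show "T (Suc i) = pr (m+k'-i) u (pr (n+i) v w)" unfolding T_def Suc by simp
      have e: "(of_nat (Suc i) * of_nat (k choose Suc i) :: complex) = of_nat k * of_nat (k' choose i)"
        using binom_k2[of k i] Suc by simp
      have "- ((-1)^(Suc i) * of_nat (Suc i) * of_nat (k choose Suc i)) = (-1)^i * (of_nat (Suc i) * of_nat (k choose Suc i) :: complex)"
        by (simp only: power_Suc mult_minus1 minus_minus mult.assoc mult_minus_left mult_1_left)
      also have "\<dots> = (-1)^i * (of_nat k * of_nat (k' choose i))" by (simp only: e)
      finally show "- ((-1)^(Suc i) * of_nat (Suc i) * of_nat (k choose Suc i)) = (of_nat k * ((-1)^i * of_nat (k' choose i)) :: complex)"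
        by (simp add: algebra_simps)
    qed
    also have "\<dots> = sc (of_nat k) (LU u v w (k-1) m n)"
      unfolding LU_def sc_sum_sc Suc by simp
    finally show ?thesis by simp
  qed
  show ?thesis unfolding 1 2 3
    by (simp add: sum_subtractf[symmetric] sum_negf[symmetric] sum.distrib[symmetric] scale_left_distrib[symmetric]
        algebra_simps)
qed

lemma LV_Dv: "LV u (D v) w k m n = - sc (of_nat n) (LV u v w k m (n-1)) - sc (of_nat k) (LV u v w (k-1) m n)"
proof -
  define T where "T i = pr (n+k-i-1) v (pr (m+i) u w)" for i
  have 1: "LV u (D v) w k m n = (\<Sum>i\<le>k. sc (- ((-1)^i * of_nat (k choose i) * of_nat (n+k-i))) (T i))"
    unfolding LV_def T_def by (intro sum.cong refl) (simp add: pr_Dsc_sc)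
  have 2: "sc (of_nat n) (LV u v w k m (n-1)) = (\<Sum>i\<le>k. sc (of_nat n * ((-1)^i * of_nat (k choose i))) (T i))"
  proof (cases n)
    case 0 then show ?thesis by simp
  next
    case (Suc n')
    then show ?thesis unfolding LV_def T_def sc_sum_sc
      by (intro sum.cong) auto
  qed
  have 3: "sc (of_nat k) (LV u v w (k-1) m n) = (\<Sum>i\<le>k. sc (of_nat k * ((-1)^i * of_nat (k - 1 choose i))) (T i))"
  proof (cases k)
    case 0 then show ?thesis by simp
  next
    case (Suc k')
    have "sc (of_nat k) (LV u v w (k-1) m n) = (\<Sum>i\<le>k'. sc (of_nat k * ((-1)^i * of_nat (k' choose i))) (T i))"
      unfolding LV_def T_def sc_sum_sc using Suc by (intro sum.cong) auto
    also have "\<dots> = (\<Sum>i\<le>Suc k'. sc (of_nat k * ((-1)^i * of_nat (k' choose i))) (T i))"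
      by (rule sum_zero_ext) (simp add: binomial_eq_0)
    finally show ?thesis using Suc by simp
  qed
  have "- sc (of_nat n) (LV u v w k m (n-1)) - sc (of_nat k) (LV u v w (k-1) m n)
     = (\<Sum>i\<le>k. sc (- (of_nat n * ((-1)^i * of_nat (k choose i))) - of_nat k * ((-1)^i * of_nat (k - 1 choose i))) (T i))"
    unfolding 2 3 by (simp add: sum_subtractf[symmetric] sum_negf[symmetric] scale_left_diff_distrib)
  also have "\<dots> = (\<Sum>i\<le>k. sc (- ((-1)^i * of_nat (k choose i) * of_nat (n+k-i))) (T i))"
  proof (intro sum.cong refl arg_cong2[where f=sc])
    fix i assume "i \<in> {..k}"
    then have ik: "i \<le> k" by simp
    have "of_nat k * ((-1)^i * of_nat (k - 1 choose i)) = (-1)^i * (of_nat k * of_nat (k - 1 choose i) :: complex)"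
      by simp
    also have "\<dots> = (-1)^i * (of_nat (k - i) * of_nat (k choose i))" using binom_k1[OF ik] by simp
    finally have e: "of_nat k * ((-1)^i * of_nat (k - 1 choose i)) = (-1)^i * (of_nat (k - i) * of_nat (k choose i) :: complex)" .
    have "(of_nat (n + k - i) :: complex) = of_nat n + of_nat (k - i)" using ik by simp
    then show "- (of_nat n * ((-1)^i * of_nat (k choose i))) - of_nat k * ((-1)^i * of_nat (k - 1 choose i))
       = - ((-1)^i * of_nat (k choose i) * of_nat (n+k-i) :: complex)"
      unfolding e by (simp add: algebra_simps)
  qed
  finally show ?thesis using 1 by simp
qed

lemma RR_Dv: "RR u (D v) w k m n = - sc (of_nat n) (RR u v w k m (n-1)) + sc (of_nat k) (RR u v w (k-1) m n)"
proof -
  define T1 where "T1 i = pr (m+n-i-1) (pr (k+i) u v) w" for i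
  define T2 where "T2 i = pr (m+n-i) (pr (k+i-1) u v) w" for i
  have 1: "RR u (D v) w k m n = (\<Sum>i\<le>m. sc (- (of_nat (m choose i) * of_nat (m+n-i))) (T1 i))
      + (\<Sum>i\<le>m. sc (of_nat (m choose i) * of_nat (k+i)) (T2 i))"
    unfolding RR_def T1_def T2_def sum.distrib[symmetric]
    by (intro sum.cong refl) (simp add: pr_uDv pr_addL pr_D pr_scL scale_right_distrib scale_right_diff_distrib)
  have 2: "sc (of_nat n) (RR u v w k m (n-1)) = (\<Sum>i\<le>m. sc (of_nat n * of_nat (m choose i)) (T1 i))"
  proof (cases n)
    case 0 then show ?thesis by simp
  next
    case (Suc n')
    then show ?thesis unfolding RR_def T1_def sc_sum_sc
      by (intro sum.cong) auto
  qed
  have 3: "sc (of_nat k) (RR u v w (k-1) m n) = (\<Sum>i\<le>m. sc (of_nat k * of_nat (m choose i)) (T2 i))"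
  proof (cases k)
    case 0 then show ?thesis by simp
  next
    case (Suc k')
    then show ?thesis unfolding RR_def T2_def sc_sum_sc
      by (intro sum.cong) auto
  qed
  have 4: "(\<Sum>i\<le>m. sc (of_nat i * of_nat (m choose i)) (T2 i)) = (\<Sum>i\<le>m. sc (of_nat (m - i) * of_nat (m choose i)) (T1 i))"
  proof (cases m)
    case 0 then show ?thesis by simp
  next
    case (Suc m')
    have "(\<Sum>i\<le>m. sc (of_nat i * of_nat (m choose i)) (T2 i))
       = (\<Sum>i\<le>m'. sc (of_nat (Suc i) * of_nat (m choose Suc i)) (T2 (Suc i)))"
      unfolding Suc sum.atMost_Suc_shift by simp
    also have "\<dots> = (\<Sum>i\<le>m'. sc (of_nat (m - i) * of_nat (m choose i)) (T1 i))"
    proof (intro sum.cong refl arg_cong2[where f=sc])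
      fix i
      show "T2 (Suc i) = T1 i" unfolding T1_def T2_def Suc by simp
      have "Suc i * (m choose Suc i) = (m - i) * (m choose i)"
        using binomial_absorption[of i m] binomial_absorb_comp[of m i] by simp
      then show "(of_nat (Suc i) * of_nat (m choose Suc i) :: complex) = of_nat (m - i) * of_nat (m choose i)"
        by (metis of_nat_mult)
    qed
    also have "\<dots> = (\<Sum>i\<le>Suc m'. sc (of_nat (m - i) * of_nat (m choose i)) (T1 i))"
      by (rule sum_zero_ext) (simp add: Suc)
    finally show ?thesis using Suc by simp
  qed
  have 5: "(\<Sum>i\<le>m. sc (- (of_nat (m choose i) * of_nat (m+n-i))) (T1 i))
     = - (\<Sum>i\<le>m. sc (of_nat n * of_nat (m choose i)) (T1 i)) - (\<Sum>i\<le>m. sc (of_nat (m - i) * of_nat (m choose i)) (T1 i))"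
    unfolding sum_negf[symmetric] sum_subtractf[symmetric]
  proof (intro sum.cong refl)
    fix i assume "i \<in> {..m}"
    then have "(of_nat (m + n - i) :: complex) = of_nat n + of_nat (m - i)" by simp
    then have "(- (of_nat (m choose i) * of_nat (m+n-i)) :: complex) = - (of_nat n * of_nat (m choose i)) - of_nat (m - i) * of_nat (m choose i)"
      by (simp add: algebra_simps)
    then show "sc (- (of_nat (m choose i) * of_nat (m+n-i))) (T1 i) =
      - sc (of_nat n * of_nat (m choose i)) (T1 i) - sc (of_nat (m - i) * of_nat (m choose i)) (T1 i)"
      by (simp only: scale_left_diff_distrib scale_minus_left)
  qed
  have 6: "(\<Sum>i\<le>m. sc (of_nat (m choose i) * of_nat (k+i)) (T2 i))
     = (\<Sum>i\<le>m. sc (of_nat k * of_nat (m choose i)) (T2 i)) + (\<Sum>i\<le>m. sc (of_nat i * of_nat (m choose i)) (T2 i))"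
    unfolding sum.distrib[symmetric]
  proof (intro sum.cong refl)
    fix i
    have "(of_nat (m choose i) * of_nat (k+i) :: complex) = of_nat k * of_nat (m choose i) + of_nat i * of_nat (m choose i)"
      by (simp add: algebra_simps)
    then show "sc (of_nat (m choose i) * of_nat (k+i)) (T2 i) = sc (of_nat k * of_nat (m choose i)) (T2 i) + sc (of_nat i * of_nat (m choose i)) (T2 i)"
      by (simp only: scale_left_distrib)
  qed
  show ?thesis unfolding 1 2 3 5 6 4 by simp
qed

lemma JJ_Dv: "JJ s u (D v) w k m n = - sc (of_nat n) (JJ s u v w k m (n-1)) + sc (of_nat k) (JJ s u v w (k-1) m n)"
proof (cases k)
  case 0
  then show ?thesis unfolding JJ_def LU_Dv LV_Dv RR_Dv
    by (simp add: algebra_simps)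
next
  case (Suc k')
  then have e: "(-1::complex)^(k-1) = - ((-1)^k)" by simp
  show ?thesis unfolding JJ_def LU_Dv LV_Dv RR_Dv e
    by (simp add: algebra_simps)
qed

lemma LU_Dw: "LU u v (D w) k m n = D (LU u v w k m n) - LU (D u) v w k m n - LU u (D v) w k m n"
proof -
  have "D (LU u v w k m n) = LU (D u) v w k m n + LU u (D v) w k m n + LU u v (D w) k m n"
    unfolding LU_def D_sum D_sc D_pr pr_addR scale_right_distrib sum.distrib by simp
  then show ?thesis by (simp add: algebra_simps)
qed

lemma LV_Dw: "LV u v (D w) k m n = D (LV u v w k m n) - LV (D u) v w k m n - LV u (D v) w k m n"
proof -
  have "D (LV u v w k m n) = LV (D u) v w k m n + LV u (D v) w k m n + LV u v (D w) k m n"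
    unfolding LV_def D_sum D_sc D_pr pr_addR scale_right_distrib sum.distrib by (simp add: algebra_simps)
  then show ?thesis by (simp add: algebra_simps)
qed

lemma RR_Dw: "RR u v (D w) k m n = D (RR u v w k m n) - RR (D u) v w k m n - RR u (D v) w k m n"
proof -
  have "D (RR u v w k m n) = RR (D u) v w k m n + RR u (D v) w k m n + RR u v (D w) k m n"
    unfolding RR_def D_sum D_sc D_pr pr_addL scale_right_distrib sum.distrib by (simp add: algebra_simps)
  then show ?thesis by (simp add: algebra_simps)
qed

lemma JJ_Dw: "JJ s u v (D w) k m n = D (JJ s u v w k m n) - JJ s (D u) v w k m n - JJ s u (D v) w k m n"
  unfolding JJ_def LU_Dw LV_Dw RR_Dw D_diff D_sc by (simp add: algebra_simps)

lemma LU_add1: "LU (x + y) v w k m n = LU x v w k m n + LU y v w k m n"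
  and LU_add2: "LU u (x + y) w k m n = LU u x w k m n + LU u y w k m n"
  and LU_add3: "LU u v (x + y) k m n = LU u v x k m n + LU u v y k m n"
  unfolding LU_def by (simp_all add: pr_addL pr_addR scale_right_distrib sum.distrib)
lemma LV_add1: "LV (x + y) v w k m n = LV x v w k m n + LV y v w k m n"
  and LV_add2: "LV u (x + y) w k m n = LV u x w k m n + LV u y w k m n"
  and LV_add3: "LV u v (x + y) k m n = LV u v x k m n + LV u v y k m n"
  unfolding LV_def by (simp_all add: pr_addL pr_addR scale_right_distrib sum.distrib)
lemma RR_add1: "RR (x + y) v w k m n = RR x v w k m n + RR y v w k m n"
  and RR_add2: "RR u (x + y) w k m n = RR u x w k m n + RR u y w k m n"
  and RR_add3: "RR u v (x + y) k m n = RR u v x k m n + RR u v y k m n"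
  unfolding RR_def by (simp_all add: pr_addL pr_addR scale_right_distrib sum.distrib)
lemma JJ_add1: "JJ s (x + y) v w k m n = JJ s x v w k m n + JJ s y v w k m n"
  and JJ_add2: "JJ s u (x + y) w k m n = JJ s u x w k m n + JJ s u y w k m n"
  and JJ_add3: "JJ s u v (x + y) k m n = JJ s u v x k m n + JJ s u v y k m n"
  unfolding JJ_def LU_add1 LU_add2 LU_add3 LV_add1 LV_add2 LV_add3 RR_add1 RR_add2 RR_add3
  by (simp_all add: scale_right_distrib algebra_simps)

definition PJ where "PJ s u v w \<longleftrightarrow> (\<forall>k m n. JJ s u v w k m n = 0)"

lemma PJ_Du: "PJ s u v w \<Longrightarrow> PJ s (D u) v w"
  unfolding PJ_def using JJ_Du by simp
lemma PJ_Dv: "PJ s u v w \<Longrightarrow> PJ s u (D v) w"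
  unfolding PJ_def using JJ_Dv by simp
lemma PJ_Dw: "PJ s u v w \<Longrightarrow> PJ s u v (D w)"
  using PJ_Du[of s u v w] PJ_Dv[of s u v w] unfolding PJ_def using JJ_Dw by simp

lemma PJ_pow: "PJ s u v w \<Longrightarrow> PJ s ((D^^a) u) ((D^^b) v) ((D^^c) w)"
proof (induction c)
  case 0
  then show ?case
  proof (induction b)
    case 0
    then show ?case by (induction a) (simp_all add: PJ_Du)
  next
    case (Suc b) then show ?case by (simp add: PJ_Dv)
  qed
next
  case (Suc c) then show ?case by (simp add: PJ_Dw)
qed

lemma Dpow_add: "(D^^k) (x + y) = (D^^k) x + (D^^k) y"
  by (induction k) (simp_all add: D_add)
lemma Dpow_sc: "(D^^k) (sc a x) = sc a ((D^^k) x)"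
  by (induction k) (simp_all add: D_sc)
lemma Dpow_zero[simp]: "(D^^k) 0 = 0"
  by (induction k) simp_all
lemma Dpow_minus: "(D^^k) (- x) = - (D^^k) x"
  by (induction k) (simp_all add: D_minus)
lemma Dpow_sum: "(D^^k) (sum f A) = (\<Sum>a\<in>A. (D^^k) (f a))"
  by (induct A rule: infinite_finite_induct) (simp_all add: Dpow_add)
lemma Dpow_D: "(D^^k) (D x) = (D^^Suc k) x"
  by (simp add: funpow_Suc_right del: funpow.simps)
lemma D_Dpow: "D ((D^^k) x) = (D^^Suc k) x"
  by simp

definition cc :: "nat \<Rightarrow> nat \<Rightarrow> complex" where "cc n k = (-1)^(n+k) / of_nat (fact k)"

lemma cc_shift: "- (of_nat (Suc k) * cc n (Suc k)) = cc n k"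
proof -
  have f: "(of_nat (fact (Suc k)) :: complex) = of_nat (Suc k) * of_nat (fact k)"
    by (simp add: fact_Suc algebra_simps)
  have nz: "(of_nat (fact k) :: complex) \<noteq> 0" "(of_nat (Suc k) :: complex) \<noteq> 0"
    by (simp, simp only: of_nat_eq_0_iff)
  have nz3: "(1 + of_nat k :: complex) \<noteq> 0" using nz(2) by simp
  have "- (of_nat (Suc k) * ((-1)^(n + Suc k) / (of_nat (Suc k) * of_nat (fact k)))) = ((-1)^(n+k) / of_nat (fact k) :: complex)"
  proof -
    have p: "(-1::complex)^(n + Suc k) = - ((-1)^(n+k))" by simp
    have g: "\<And>S F a :: complex. S \<noteq> 0 \<Longrightarrow> - (S * (- a / (S * F))) = a / F"
      by (simp add: divide_simps)
    show ?thesis unfolding p using g[OF nz(2)] by blast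
  qed
  then show ?thesis unfolding cc_def f .
qed

definition SK where
  "SK s u v n K = pr n u v + sc s (\<Sum>k<K. sc (cc n k) ((D^^k) (pr (n+k) v u)))"

lemma SK_add1: "SK s (x + y) v n K = SK s x v n K + SK s y v n K"
  and SK_add2: "SK s u (x + y) n K = SK s u x n K + SK s u y n K"
  unfolding SK_def by (simp_all add: pr_addL pr_addR Dpow_add scale_right_distrib sum.distrib algebra_simps)

lemma SK_cut: assumes "\<forall>j\<ge>K. pr j v u = 0" "K \<le> K'" shows "SK s u v n K' = SK s u v n K"
proof -
  have "(\<Sum>k<K'. sc (cc n k) ((D^^k) (pr (n+k) v u))) = (\<Sum>k<K. sc (cc n k) ((D^^k) (pr (n+k) v u)))"
    by (rule sum.mono_neutral_right) (use assms in auto)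
  then show ?thesis unfolding SK_def by simp
qed

lemma shift_sum: assumes "pr (n+K) v u = 0"
  shows "(\<Sum>k<Suc K. sc (cc n k) ((D^^k) (D (pr (n+k) v u))))
       = (\<Sum>k<Suc K. sc (- (of_nat k * cc n k)) ((D^^k) (pr (n+k-1) v u)))"
proof -
  have "(\<Sum>k<Suc K. sc (cc n k) ((D^^k) (D (pr (n+k) v u)))) = (\<Sum>k<K. sc (cc n k) ((D^^k) (D (pr (n+k) v u))))"
    using assms by simp
  also have "\<dots> = (\<Sum>k<K. sc (- (of_nat (Suc k) * cc n (Suc k))) ((D^^(Suc k)) (pr (n+ Suc k - 1) v u)))"
    by (intro sum.cong refl) (simp only: cc_shift Dpow_D, simp)
  also have "\<dots> = (\<Sum>k<Suc K. sc (- (of_nat k * cc n k)) ((D^^k) (pr (n+k-1) v u)))"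
    unfolding sum.lessThan_Suc_shift by simp
  finally show ?thesis .
qed

lemma SK_Du: assumes "\<forall>j\<ge>K. pr j v u = 0"
  shows "SK s (D u) v n (Suc K) = - sc (of_nat n) (SK s u v (n-1) (Suc K))"
proof -
  define Y where "Y k = (D^^k) (pr (n+k-1) v u)" for k
  have "(\<Sum>k<Suc K. sc (cc n k) ((D^^k) (pr (n+k) v (D u))))
     = (\<Sum>k<Suc K. sc (cc n k) ((D^^k) (D (pr (n+k) v u)))) + (\<Sum>k<Suc K. sc (cc n k * of_nat (n+k)) (Y k))"
    unfolding Y_def sum.distrib[symmetric] by (intro sum.cong refl) (simp add: pr_uDv Dpow_add Dpow_sc scale_right_distrib)
  also have "\<dots> = (\<Sum>k<Suc K. sc (- (of_nat k * cc n k)) (Y k)) + (\<Sum>k<Suc K. sc (cc n k * of_nat (n+k)) (Y k))"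
    unfolding Y_def using assms by (subst shift_sum) auto
  also have "\<dots> = (\<Sum>k<Suc K. sc (of_nat n * cc n k) (Y k))"
    unfolding sum_sc_combine by (intro sum.cong refl) (simp add: algebra_simps)
  finally have 1: "(\<Sum>k<Suc K. sc (cc n k) ((D^^k) (pr (n+k) v (D u)))) = (\<Sum>k<Suc K. sc (of_nat n * cc n k) (Y k))" .
  show ?thesis
  proof (cases n)
    case 0
    then show ?thesis unfolding SK_def 1 by (simp add: pr_D)
  next
    case (Suc n')
    have 2: "sc (of_nat n) (\<Sum>k<Suc K. sc (cc (n-1) k) ((D^^k) (pr (n-1+k) v u))) = - (\<Sum>k<Suc K. sc (of_nat n * cc n k) (Y k))"
      unfolding sc_sum_sc sum_negf[symmetric] Y_def
      by (intro sum.cong refl) (simp add: Suc cc_def scale_minus_left[symmetric] del: scale_minus_left)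
    have "SK s (D u) v n (Suc K) = - sc (of_nat n) (pr (n-1) u v) + sc s (\<Sum>k<Suc K. sc (of_nat n * cc n k) (Y k))"
      unfolding SK_def 1 pr_D by simp
    also have "\<dots> = - sc (of_nat n) (pr (n-1) u v) - sc s (sc (of_nat n) (\<Sum>k<Suc K. sc (cc (n-1) k) ((D^^k) (pr (n-1+k) v u))))"
      unfolding 2 by (simp del: sum.lessThan_Suc)
    also have "\<dots> = - sc (of_nat n) (SK s u v (n-1) (Suc K))"
      unfolding SK_def scale_right_distrib scale_left_commute[of "of_nat n" s] by (simp del: sum.lessThan_Suc)
    finally show ?thesis .
  qed
qed

lemma SK_Dv: assumes "\<forall>j\<ge>K. pr j v u = 0"
  shows "SK s u (D v) n (Suc K) = D (SK s u v n (Suc K)) + sc (of_nat n) (SK s u v (n-1) (Suc K))"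
proof -
  define Y where "Y k = (D^^k) (pr (n+k-1) v u)" for k
  have 1: "(\<Sum>k<Suc K. sc (cc n k) ((D^^k) (pr (n+k) (D v) u))) = (\<Sum>k<Suc K. sc (- (cc n k * of_nat (n+k))) (Y k))"
    unfolding Y_def by (intro sum.cong refl) (simp add: pr_D Dpow_sc Dpow_minus)
  have 2: "D (\<Sum>k<Suc K. sc (cc n k) ((D^^k) (pr (n+k) v u))) = (\<Sum>k<Suc K. sc (- (of_nat k * cc n k)) (Y k))"
    unfolding Y_def D_sum D_sc using assms by (subst shift_sum[symmetric]) (auto simp: Dpow_D)
  have 3: "sc (of_nat n) (\<Sum>k<Suc K. sc (cc (n-1) k) ((D^^k) (pr (n-1+k) v u))) = (\<Sum>k<Suc K. sc (- (of_nat n * cc n k)) (Y k))"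
  proof (cases n)
    case 0 then show ?thesis by simp
  next
    case (Suc n')
    show ?thesis unfolding sc_sum_sc Y_def
      by (intro sum.cong refl) (simp add: Suc cc_def)
  qed
  have 4: "(\<Sum>k<Suc K. sc (- (cc n k * of_nat (n+k))) (Y k)) = (\<Sum>k<Suc K. sc (- (of_nat k * cc n k)) (Y k)) + (\<Sum>k<Suc K. sc (- (of_nat n * cc n k)) (Y k))"
    unfolding sum_sc_combine by (intro sum.cong refl) (simp add: algebra_simps)
  define A where "A = (\<Sum>k<Suc K. sc (cc n k) ((D^^k) (pr (n+k) v u)))"
  define B where "B = (\<Sum>k<Suc K. sc (cc (n-1) k) ((D^^k) (pr (n-1+k) v u)))"
  define S1 where "S1 = (\<Sum>k<Suc K. sc (- (of_nat k * cc n k)) (Y k))"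
  define S2 where "S2 = (\<Sum>k<Suc K. sc (- (of_nat n * cc n k)) (Y k))"
  have "SK s u (D v) n (Suc K) = D (pr n u v) + sc (of_nat n) (pr (n-1) u v) + sc s (S1 + S2)"
    unfolding SK_def 1 4 pr_uDv S1_def S2_def by simp
  also have "\<dots> = D (pr n u v + sc s A) + sc (of_nat n) (pr (n-1) u v + sc s B)"
    unfolding D_add D_sc scale_right_distrib A_def B_def 2 scale_left_commute[of "of_nat n" s] 3 S1_def S2_def
    by (simp only: add.assoc add.left_commute)
  also have "\<dots> = D (SK s u v n (Suc K)) + sc (of_nat n) (SK s u v (n-1) (Suc K))"
    unfolding SK_def A_def B_def by simp
  finally show ?thesis .
qed

end

locale pvla_nil = pvla +
  assumes nilp: "\<exists>N. \<forall>j\<ge>N. pr j u v = 0"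
begin

definition SKOK where "SKOK s u v \<longleftrightarrow> (\<forall>n K. (\<forall>j\<ge>K. pr j v u = 0) \<longrightarrow> SK s u v n K = 0)"

lemma SKOK_Du: assumes "SKOK s u v" shows "SKOK s (D u) v"
  unfolding SKOK_def
proof (intro allI impI)
  fix n K assume K: "\<forall>j\<ge>K. pr j v (D u) = 0"
  obtain N where N: "\<forall>j\<ge>N. pr j v u = 0" using nilp by blast
  define K' where "K' = max K N"
  have N': "\<forall>j\<ge>K'. pr j v u = 0" using N unfolding K'_def by simp
  have "SK s (D u) v n K = SK s (D u) v n (Suc K')"
    using SK_cut[OF K, of "Suc K'"] unfolding K'_def by simp
  also have "\<dots> = - sc (of_nat n) (SK s u v (n-1) (Suc K'))" by (rule SK_Du[OF N'])
  also have "\<dots> = 0" using assms N' unfolding SKOK_def by simp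
  finally show "SK s (D u) v n K = 0" .
qed

lemma SKOK_Dv: assumes "SKOK s u v" shows "SKOK s u (D v)"
  unfolding SKOK_def
proof (intro allI impI)
  fix n K assume K: "\<forall>j\<ge>K. pr j (D v) u = 0"
  obtain N where N: "\<forall>j\<ge>N. pr j v u = 0" using nilp by blast
  define K' where "K' = max K N"
  have N': "\<forall>j\<ge>K'. pr j v u = 0" using N unfolding K'_def by simp
  have "SK s u (D v) n K = SK s u (D v) n (Suc K')"
    using SK_cut[OF K, of "Suc K'"] unfolding K'_def by simp
  also have "\<dots> = D (SK s u v n (Suc K')) + sc (of_nat n) (SK s u v (n-1) (Suc K'))" by (rule SK_Dv[OF N'])
  also have "\<dots> = 0" using assms N' unfolding SKOK_def by simp
  finally show "SK s u (D v) n K = 0" .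
qed

lemma SKOK_pow: "SKOK s u v \<Longrightarrow> SKOK s ((D^^a) u) ((D^^b) v)"
proof (induction b)
  case 0 then show ?case by (induction a) (simp_all add: SKOK_Du)
next
  case (Suc b) then show ?case by (simp add: SKOK_Dv)
qed

end

lemma coeff_pscale: "module sc \<Longrightarrow> coeff (pscale sc c A) k = sc c (coeff A k)"
  unfolding pscale_def by (simp add: coeff_map_poly module.scale_zero_right)

lemma pscale_eqI: "module sc \<Longrightarrow> (\<And>k. coeff X k = sc c (coeff A k)) \<Longrightarrow> X = pscale sc c A"
  by (simp add: poly_eq_iff coeff_pscale)

lemma module_pscale: assumes "module sc" shows "module (pscale sc)"
proof
  fix a b :: complex and x y :: "'a poly"
  show "pscale sc a (x + y) = pscale sc a x + pscale sc a y"
    using assms by (simp add: poly_eq_iff coeff_pscale module.scale_right_distrib)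
  show "pscale sc (a + b) x = pscale sc a x + pscale sc b x"
    using assms by (simp add: poly_eq_iff coeff_pscale module.scale_left_distrib)
  show "pscale sc a (pscale sc b x) = pscale sc (a * b) x"
    using assms by (simp add: poly_eq_iff coeff_pscale module.scale_scale module.scale_one)
  show "pscale sc 1 x = x"
    using assms by (simp add: poly_eq_iff coeff_pscale module.scale_scale module.scale_one)
qed

lemma pscale_monom: "module sc \<Longrightarrow> pscale sc c (monom x k) = monom (sc c x) k"
  by (simp add: poly_eq_iff coeff_pscale module.scale_zero_right)

lemma pscale_pCons: "module sc \<Longrightarrow> pscale sc c [:x:] = [:sc c x:]"
  by (simp add: poly_eq_iff coeff_pscale module.scale_zero_right coeff_pCons split: nat.splits)

lemma Dop_monom: "Dop (monom x k) = monom x (Suc k)"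
  by (simp add: Dop_def monom_Suc)

lemma Dop_pow_const: "(Dop ^^ k) [:x:] = monom x k"
  by (induction k) (simp_all add: monom_0 Dop_monom)

lemma Dop_pow_monom: "(Dop ^^ k) (monom x a) = monom x (k + a)"
  by (induction k) (simp_all add: Dop_monom)

lemma Dop_add: "Dop (x + y) = Dop x + Dop y"
  by (simp add: Dop_def)

lemma Dop_pscale: "module sc \<Longrightarrow> Dop (pscale sc c x) = pscale sc c (Dop x)"
  by (simp add: poly_eq_iff coeff_pscale Dop_def coeff_pCons module.scale_zero_right split: nat.splits)

lemma Dop_pow_zero[simp]: "(Dop ^^ k) 0 = 0"
  by (induction k) (simp_all add: Dop_def)

lemma additive_ext:
  fixes \<Phi> :: "'a::ab_group_add poly \<Rightarrow> 'b::ab_group_add"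
  assumes add: "\<And>x y. \<Phi> (x + y) = \<Phi> x + \<Phi> y"
    and mon: "\<And>u a. u \<in> P \<Longrightarrow> a \<le> degree A \<Longrightarrow> \<Phi> (monom u a) = 0"
    and cf: "\<And>k. coeff A k \<in> P"
  shows "\<Phi> A = 0"
proof -
  interpret additive \<Phi> by standard (rule add)
  have "\<Phi> A = \<Phi> (\<Sum>i\<le>degree A. monom (coeff A i) i)" by (simp add: poly_as_sum_of_monoms)
  also have "\<dots> = (\<Sum>i\<le>degree A. \<Phi> (monom (coeff A i) i))" by (rule sum)
  also have "\<dots> = 0" using mon cf by simp
  finally show ?thesis .
qed

lemma additive_ext2:
  fixes \<Phi> :: "'a::ab_group_add poly \<Rightarrow> 'c::ab_group_add poly \<Rightarrow> 'b::ab_group_add"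
  assumes addL: "\<And>x y B. \<Phi> (x + y) B = \<Phi> x B + \<Phi> y B"
    and addR: "\<And>A x y. \<Phi> A (x + y) = \<Phi> A x + \<Phi> A y"
    and mon: "\<And>u v a b. u \<in> P \<Longrightarrow> v \<in> Q \<Longrightarrow> a \<le> degree A \<Longrightarrow> b \<le> degree B \<Longrightarrow> \<Phi> (monom u a) (monom v b) = 0"
    and cfA: "\<And>k. coeff A k \<in> P" and cfB: "\<And>k. coeff B k \<in> Q"
  shows "\<Phi> A B = 0"
proof (rule additive_ext[where \<Phi>="\<lambda>A'. \<Phi> A' B" and P=P])
  show "\<And>x y. \<Phi> (x + y) B = \<Phi> x B + \<Phi> y B" by (rule addL)
  show "coeff A k \<in> P" for k by (rule cfA)
  fix u a assume u: "u \<in> P" and a: "a \<le> degree A"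
  show "\<Phi> (monom u a) B = 0"
    by (rule additive_ext[where \<Phi>="\<lambda>B'. \<Phi> (monom u a) B'" and P=Q]) (use addR mon u a cfB in auto)
qed

lemma par_cases: "par S0 S1 p = (if p then S1 else S0)" by (simp add: par_def)

lemma sub_par: "graded_space sc S0 S1 \<Longrightarrow> module.subspace sc (par S0 S1 p)"
  unfolding graded_space_def par_def by auto

lemma par_polypar: "par (polypar S0 S1 False) (polypar S0 S1 True) p = polypar S0 S1 p"
  by (simp add: par_def)

lemma polypar_sub: assumes g: "graded_space sc S0 S1"
  shows "module.subspace (pscale sc) (polypar S0 S1 p)"
proof -
  have m: "module sc" using g unfolding graded_space_def by simp
  have s: "module.subspace sc (par S0 S1 p)" by (rule sub_par[OF g])
  show ?thesis
    unfolding module.subspace_def[OF module_pscale[OF m]] polypar_def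
    using module.subspace_0[OF m s] module.subspace_add[OF m s] module.subspace_scale[OF m s]
    by (auto simp: coeff_pscale[OF m])
qed

lemma const_polypar: "[:u:] \<in> polypar S0 S1 p \<longleftrightarrow> u \<in> par S0 S1 p" if "graded_space sc S0 S1"
  using module.subspace_0[OF _ sub_par[OF that]] that unfolding polypar_def graded_space_def
  by (auto simp: coeff_pCons split: nat.splits)

lemma monom_polypar: "u \<in> par S0 S1 p \<Longrightarrow> graded_space sc S0 S1 \<Longrightarrow> monom u a \<in> polypar S0 S1 p"
  using module.subspace_0[OF _ sub_par] unfolding polypar_def graded_space_def by auto

lemma graded_poly: assumes g: "graded_space sc S0 S1"
  shows "graded_space (pscale sc) (polypar S0 S1 False) (polypar S0 S1 True)"
proof -
  have m: "module sc" using g unfolding graded_space_def by simp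
  have int: "S0 \<inter> S1 = {0}" and dec: "\<forall>x. \<exists>a\<in>S0. \<exists>b\<in>S1. x = a + b"
    using g unfolding graded_space_def by auto
  have s0: "module.subspace sc S0" and s1: "module.subspace sc S1"
    using sub_par[OF g, of False] sub_par[OF g, of True] by (simp_all add: par_def)
  define e0 where "e0 y = (if y = 0 then 0 else (SOME a. a \<in> S0 \<and> (\<exists>b\<in>S1. y = a + b)))" for y
  have e0: "e0 y \<in> S0 \<and> y - e0 y \<in> S1" for y
  proof (cases "y = 0")
    case True then show ?thesis using module.subspace_0[OF m s0] module.subspace_0[OF m s1] by (simp add: e0_def)
  next
    case False
    have ex: "\<exists>a. a \<in> S0 \<and> (\<exists>b\<in>S1. y = a + b)" using dec by blast
    have "(SOME a. a \<in> S0 \<and> (\<exists>b\<in>S1. y = a + b)) \<in> S0 \<and> (\<exists>b\<in>S1. y = (SOME a. a \<in> S0 \<and> (\<exists>b\<in>S1. y = a + b)) + b)"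
      by (rule someI_ex[OF ex])
    moreover have "e0 y = (SOME a. a \<in> S0 \<and> (\<exists>b\<in>S1. y = a + b))" using False by (simp add: e0_def)
    ultimately have h: "e0 y \<in> S0" "\<exists>b\<in>S1. y = e0 y + b" by simp_all
    then obtain b where b1: "b \<in> S1" and hb: "y = e0 y + b" by blast
    have "y - e0 y = b" using arg_cong[OF hb, of "\<lambda>t. t - e0 y"] by simp
    then have "y - e0 y \<in> S1" using b1 by simp
    then show ?thesis using h by simp
  qed
  have e00: "e0 0 = 0" by (simp add: e0_def)
  have inter: "polypar S0 S1 False \<inter> polypar S0 S1 True = {0}"
  proof
    show "polypar S0 S1 False \<inter> polypar S0 S1 True \<subseteq> {0}"
    proof
      fix x assume x: "x \<in> polypar S0 S1 False \<inter> polypar S0 S1 True"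
      have "coeff x k = 0" for k
      proof -
        have "coeff x k \<in> S0" "coeff x k \<in> S1" using x by (simp_all add: polypar_def par_def)
        then have "coeff x k \<in> S0 \<inter> S1" by blast
        then show ?thesis using int by blast
      qed
      then have "x = 0" by (simp add: poly_eq_iff)
      then show "x \<in> {0}" by simp
    qed
    show "{0} \<subseteq> polypar S0 S1 False \<inter> polypar S0 S1 True"
      using module.subspace_0[OF m s0] module.subspace_0[OF m s1] by (simp add: polypar_def par_def)
  qed
  have decp: "\<exists>a\<in>polypar S0 S1 False. \<exists>b\<in>polypar S0 S1 True. x = a + b" for x :: "'a poly"
  proof -
    define A where "A = (\<Sum>i\<le>degree x. monom (e0 (coeff x i)) i)"
    have cA: "coeff A k = e0 (coeff x k)" for k
      unfolding A_def coeff_sum by (cases "k \<le> degree x") (simp_all add: coeff_eq_0 e00)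
    have "A \<in> polypar S0 S1 False" unfolding polypar_def par_def using e0 cA by simp
    moreover have "x - A \<in> polypar S0 S1 True" unfolding polypar_def par_def using e0 cA by simp
    moreover have "x = A + (x - A)" by simp
    ultimately show ?thesis by blast
  qed
  show ?thesis unfolding graded_space_def
    using module_pscale[OF m] polypar_sub[OF g, of False] polypar_sub[OF g, of True] inter decp by blast
qed



definition kk :: "nat \<Rightarrow> nat \<Rightarrow> nat \<Rightarrow> complex" where
  "kk a b n = (if a \<le> n \<and> n \<le> a + b then (-1)^a * of_nat (b choose (n - a)) * of_nat (fact n) else 0)"

lemma kk_D1: "kk (Suc a) b j = - of_nat j * kk a b (j - 1)"
  unfolding kk_def by (cases j) (auto simp: fact_Suc algebra_simps)

lemma kk_D2: "kk a b n = kk (Suc a) b n + kk a (Suc b) n"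
proof (cases "a \<le> n")
  case False then show ?thesis unfolding kk_def by auto
next
  case True
  then obtain r where r: "n = a + r" using le_Suc_ex by blast
  show ?thesis
  proof (cases r)
    case 0 then show ?thesis unfolding kk_def r by simp
  next
    case (Suc r')
    have e: "(Suc b choose Suc r') = (b choose r') + (b choose Suc r')" by simp
    show ?thesis unfolding kk_def r Suc
      by (cases "Suc r' \<le> b"; cases "r' \<le> b") (auto simp: e binomial_eq_0 algebra_simps)
  qed
qed

context
  fixes sc :: "complex \<Rightarrow> 'a::ab_group_add \<Rightarrow> 'a" and F :: "nat \<Rightarrow> 'a \<Rightarrow> 'a \<Rightarrow> 'a poly"
    and br :: "'a \<Rightarrow> 'a \<Rightarrow> 'a"
  assumes msc: "module sc"
    and brbil: "bilinear_map sc sc br"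
    and Fform: "\<And>n u v. F n u v = (if n = 0 then [:br u v:] else 0)"
begin

lemma pscale_zero[simp]: "pscale sc c 0 = 0"
  by (simp add: pscale_def)

lemma pscale_zero_left[simp]: "pscale sc 0 x = 0"
  using msc by (simp add: poly_eq_iff coeff_pscale module.scale_zero_left)

lemma br_zeroL[simp]: "br 0 y = 0" and br_zeroR[simp]: "br y 0 = 0"
  using brbil unfolding bilinear_map_def by (metis add_cancel_right_left)+

lemma inner_collapse:
  "(\<Sum>j\<le>b. if a + j \<le> n then pscale sc ((-1)^a * of_nat (b choose j) * of_nat (fact n) / of_nat (fact (n - a - j)))
        ((Dop^^(b-j)) (F (n-a-j) x y)) else 0) = pscale sc (kk a b n) (monom (br x y) (a+b-n))"
proof -
  define T where "T = (if a \<le> n then pscale sc ((-1)^a * of_nat (b choose (n-a)) * of_nat (fact n)) (monom (br x y) (b - (n-a))) else 0)"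
  have "(\<Sum>j\<le>b. if a + j \<le> n then pscale sc ((-1)^a * of_nat (b choose j) * of_nat (fact n) / of_nat (fact (n - a - j)))
        ((Dop^^(b-j)) (F (n-a-j) x y)) else 0) = (\<Sum>j\<le>b. if j = n - a then T else 0)"
  proof (intro sum.cong refl)
    fix j
    show "(if a + j \<le> n then pscale sc ((-1)^a * of_nat (b choose j) * of_nat (fact n) / of_nat (fact (n - a - j)))
        ((Dop^^(b-j)) (F (n-a-j) x y)) else 0) = (if j = n - a then T else 0)"
      unfolding T_def Fform by (auto simp: Dop_pow_const)
  qed
  also have "\<dots> = (if n - a \<le> b then T else 0)" by (simp add: sum.delta')
  also have "\<dots> = pscale sc (kk a b n) (monom (br x y) (a+b-n))"
    unfolding T_def kk_def by (auto intro!: arg_cong2[where f="\<lambda>c d. pscale sc c (monom (br x y) d)"])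
  finally show ?thesis .
qed

lemma EP1: "extprod sc F n A B = (\<Sum>a\<le>degree A. \<Sum>b\<le>degree B. pscale sc (kk a b n) (monom (br (coeff A a) (coeff B b)) (a+b-n)))"
  unfolding extprod_def inner_collapse ..

definition GG where "GG n A B a b = pscale sc (kk a b n) (monom (br (coeff A a) (coeff B b)) (a+b-n))"

lemma EP2: assumes "degree A \<le> NA" "degree B \<le> NB"
  shows "extprod sc F n A B = (\<Sum>a\<le>NA. \<Sum>b\<le>NB. GG n A B a b)"
proof -
  have "(\<Sum>a\<le>NA. \<Sum>b\<le>NB. GG n A B a b) = (\<Sum>a\<le>degree A. \<Sum>b\<le>NB. GG n A B a b)"
    by (rule sum.mono_neutral_right) (use assms in \<open>auto simp: GG_def coeff_eq_0\<close>)
  also have "\<dots> = (\<Sum>a\<le>degree A. \<Sum>b\<le>degree B. GG n A B a b)"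
    by (intro sum.cong refl sum.mono_neutral_right) (use assms in \<open>auto simp: GG_def coeff_eq_0\<close>)
  finally show ?thesis unfolding EP1 GG_def by simp
qed


lemma br_addL: "br (x + y) z = br x z + br y z" and br_addR: "br z (x + y) = br z x + br z y"
  and br_scL: "br (sc c x) y = sc c (br x y)" and br_scR: "br x (sc c y) = sc c (br x y)"
  using brbil unfolding bilinear_map_def by blast+

lemma mps: "module (pscale sc)" by (rule module_pscale[OF msc])

lemma ps_add: "pscale sc c (x + y) = pscale sc c x + pscale sc c y"
  using module.scale_right_distrib[OF mps] .
lemma ps_scale: "pscale sc a (pscale sc b x) = pscale sc (a * b) x"
  using module.scale_scale[OF mps] .
lemma ps_sum: "pscale sc c (sum f A) = (\<Sum>x\<in>A. pscale sc c (f x))"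
  using module.scale_sum_right[OF mps] .

lemma degree_pscale: "degree (pscale sc c A) \<le> degree A"
  by (rule degree_le) (simp add: coeff_pscale[OF msc] coeff_eq_0 module.scale_zero_right[OF msc])

lemma ext_addL: "extprod sc F n (A + A') B = extprod sc F n A B + extprod sc F n A' B"
proof -
  define N where "N = max (degree A) (degree A')"
  have d: "degree A \<le> N" "degree A' \<le> N" "degree (A + A') \<le> N"
    unfolding N_def by (auto intro: degree_add_le)
  show ?thesis
    unfolding EP2[OF d(3) order.refl] EP2[OF d(1) order.refl] EP2[OF d(2) order.refl] sum.distrib[symmetric]
    by (intro sum.cong refl) (simp add: GG_def br_addL add_monom[symmetric] ps_add)
qed

lemma ext_addR: "extprod sc F n B (A + A') = extprod sc F n B A + extprod sc F n B A'"
proof -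
  define N where "N = max (degree A) (degree A')"
  have d: "degree A \<le> N" "degree A' \<le> N" "degree (A + A') \<le> N"
    unfolding N_def by (auto intro: degree_add_le)
  show ?thesis
    unfolding EP2[OF order.refl d(3)] EP2[OF order.refl d(1)] EP2[OF order.refl d(2)] sum.distrib[symmetric]
    by (intro sum.cong refl) (simp add: GG_def br_addR add_monom[symmetric] ps_add)
qed

lemma GG_scL: "GG n (pscale sc c A) B a b = pscale sc c (GG n A B a b)"
proof -
  have "monom (br (coeff (pscale sc c A) a) (coeff B b)) (a+b-n) = pscale sc c (monom (br (coeff A a) (coeff B b)) (a+b-n))"
    by (simp add: coeff_pscale[OF msc] br_scL pscale_monom[OF msc])
  then show ?thesis unfolding GG_def by (simp add: ps_scale mult.commute)
qed

lemma GG_scR: "GG n B (pscale sc c A) a b = pscale sc c (GG n B A a b)"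
proof -
  have "monom (br (coeff B a) (coeff (pscale sc c A) b)) (a+b-n) = pscale sc c (monom (br (coeff B a) (coeff A b)) (a+b-n))"
    by (simp add: coeff_pscale[OF msc] br_scR pscale_monom[OF msc])
  then show ?thesis unfolding GG_def by (simp add: ps_scale mult.commute)
qed

lemma ext_scL: "extprod sc F n (pscale sc c A) B = pscale sc c (extprod sc F n A B)"
proof -
  have "extprod sc F n (pscale sc c A) B = (\<Sum>a\<le>degree A. \<Sum>b\<le>degree B. GG n (pscale sc c A) B a b)"
    by (rule EP2[OF degree_pscale order.refl])
  also have "\<dots> = pscale sc c (\<Sum>a\<le>degree A. \<Sum>b\<le>degree B. GG n A B a b)"
    unfolding GG_scL ps_sum ..
  also have "\<dots> = pscale sc c (extprod sc F n A B)"
    by (simp add: EP2[OF order.refl order.refl])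
  finally show ?thesis .
qed

lemma ext_scR: "extprod sc F n B (pscale sc c A) = pscale sc c (extprod sc F n B A)"
proof -
  have "extprod sc F n B (pscale sc c A) = (\<Sum>a\<le>degree B. \<Sum>b\<le>degree A. GG n B (pscale sc c A) a b)"
    by (rule EP2[OF order.refl degree_pscale])
  also have "\<dots> = pscale sc c (\<Sum>a\<le>degree B. \<Sum>b\<le>degree A. GG n B A a b)"
    unfolding GG_scR ps_sum ..
  also have "\<dots> = pscale sc c (extprod sc F n B A)"
    by (simp add: EP2[OF order.refl order.refl])
  finally show ?thesis .
qed

lemma ext_monom: "extprod sc F n (monom u a) (monom v b) = pscale sc (kk a b n) (monom (br u v) (a+b-n))"
proof -
  define X where "X = pscale sc (kk a b n) (monom (br u v) (a+b-n))"
  have pw: "\<And>a' b'. GG n (monom u a) (monom v b) a' b' = (if a' = a then (if b' = b then X else 0) else 0)"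
    by (auto simp: GG_def X_def)
  have "extprod sc F n (monom u a) (monom v b) = (\<Sum>a'\<le>a. \<Sum>b'\<le>b. GG n (monom u a) (monom v b) a' b')"
    by (rule EP2) (simp_all add: degree_monom_le)
  also have "\<dots> = (\<Sum>a'\<le>a. if a' = a then X else 0)"
    by (intro sum.cong refl) (simp add: pw)
  also have "\<dots> = X"
    by simp
  finally show ?thesis unfolding X_def .
qed

lemma ext_zeroL[simp]: "extprod sc F n 0 B = 0"
  using ext_addL[of n 0 0 B] by simp
lemma ext_zeroR[simp]: "extprod sc F n B 0 = 0"
  using ext_addR[of n B 0 0] by simp

lemma ext_D: "extprod sc F n (Dop A) B = - pscale sc (of_nat n) (extprod sc F (n-1) A B)"
proof -
  have "extprod sc F n (Dop A) B + pscale sc (of_nat n) (extprod sc F (n-1) A B) = 0"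
  proof (rule additive_ext2[where P=UNIV and Q=UNIV and \<Phi>="\<lambda>A B. extprod sc F n (Dop A) B + pscale sc (of_nat n) (extprod sc F (n-1) A B)"])
    fix u v a b
    show "extprod sc F n (Dop (monom u a)) (monom v b) + pscale sc (of_nat n) (extprod sc F (n-1) (monom u a) (monom v b)) = 0"
    proof (cases "n \<noteq> 0 \<and> kk a b (n-1) \<noteq> 0")
      case True
      then have "a \<le> n - 1" "n - 1 \<le> a + b" "n \<ge> 1" unfolding kk_def by (auto split: if_splits)
      then have d: "Suc a + b - n = a + b - (n - 1)" by simp
      show ?thesis unfolding Dop_monom ext_monom kk_D1 d ps_scale
        by (simp add: module.scale_left_distrib[OF mps, symmetric])
    next
      case False
      then show ?thesis unfolding Dop_monom ext_monom kk_D1 by auto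
    qed
  qed (simp_all add: Dop_add ext_addL ext_addR ps_add)
  then show ?thesis by (simp add: eq_neg_iff_add_eq_0)
qed

lemma Dop_ext: "Dop (extprod sc F n A B) = extprod sc F n (Dop A) B + extprod sc F n A (Dop B)"
proof -
  have "Dop (extprod sc F n A B) - (extprod sc F n (Dop A) B + extprod sc F n A (Dop B)) = 0"
  proof (rule additive_ext2[where P=UNIV and Q=UNIV and \<Phi>="\<lambda>A B. Dop (extprod sc F n A B) - (extprod sc F n (Dop A) B + extprod sc F n A (Dop B))"])
    fix u v a b
    have d: "Suc a + b - n = Suc (a + b) - n" "a + Suc b - n = Suc (a + b) - n" by simp_all
    have e: "Dop (monom (br u v) (a + b - n)) = monom (br u v) (Suc (a + b) - n)" if "kk a b n \<noteq> 0"
      using that unfolding Dop_monom kk_def by (auto split: if_splits intro!: arg_cong[where f="monom _"])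
    have L: "Dop (extprod sc F n (monom u a) (monom v b)) = pscale sc (kk a b n) (monom (br u v) (Suc (a + b) - n))"
      unfolding ext_monom Dop_pscale[OF msc] by (cases "kk a b n = 0") (simp_all add: e)
    have R: "extprod sc F n (Dop (monom u a)) (monom v b) + extprod sc F n (monom u a) (Dop (monom v b))
        = pscale sc (kk a b n) (monom (br u v) (Suc (a + b) - n))"
      unfolding Dop_monom ext_monom d kk_D2[of a b n] by (simp add: module.scale_left_distrib[OF mps])
    show "Dop (extprod sc F n (monom u a) (monom v b)) - (extprod sc F n (Dop (monom u a)) (monom v b) + extprod sc F n (monom u a) (Dop (monom v b))) = 0"
      unfolding L R by simp
  qed (simp_all add: Dop_add ext_addL ext_addR algebra_simps)
  then show ?thesis by simp
qed

lemma ext_vanish: assumes "n > degree A + degree B" shows "extprod sc F n A B = 0"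
  unfolding EP1 using assms by (intro sum.neutral ballI) (auto simp: kk_def)

lemma ext_nilp: "\<exists>N. \<forall>j\<ge>N. extprod sc F j A B = 0"
  by (rule exI[of _ "Suc (degree A + degree B)"]) (auto intro: ext_vanish)

lemma ext_const: "extprod sc F n [:x:] [:y:] = (if n = 0 then [:br x y:] else 0)"
  using ext_monom[of n x 0 y 0] by (simp add: monom_0 kk_def module.scale_one[OF mps])

interpretation E: pvla_nil "pscale sc" Dop "extprod sc F"
proof (unfold_locales)
qed (simp_all add: mps[unfolded module_def] Dop_add Dop_pscale[OF msc] ext_addL ext_addR ext_scL ext_scR ext_D Dop_ext ext_nilp)


lemma cc00: "E.cc 0 0 = 1"
  by (simp add: E.cc_def)

lemma SKOK_base:
  assumes skew: "br u v = - sc s (br v u)"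
  shows "E.SKOK s [:u:] [:v:]"
  unfolding E.SKOK_def
proof (intro allI impI)
  fix n K assume K: "\<forall>j\<ge>K. extprod sc F j [:v:] [:u:] = 0"
  show "E.SK s [:u:] [:v:] n K = 0"
  proof (cases n)
    case (Suc n')
    then show ?thesis unfolding E.SK_def by (simp add: ext_const)
  next
    case 0
    have "(\<Sum>k<K. pscale sc (E.cc n k) ((Dop ^^ k) (extprod sc F (n + k) [:v:] [:u:])))
        = (\<Sum>k<K. if k = 0 then [:br v u:] else 0)"
      by (intro sum.cong refl) (simp add: 0 ext_const cc00 module.scale_one[OF mps])
    also have "\<dots> = (if K = 0 then 0 else [:br v u:])" by (simp add: sum.delta)
    finally have e: "(\<Sum>k<K. pscale sc (E.cc n k) ((Dop ^^ k) (extprod sc F (n + k) [:v:] [:u:])))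
        = (if K = 0 then 0 else [:br v u:])" .
    show ?thesis
    proof (cases "K = 0")
      case True
      then have "br v u = 0" using K ext_const[of 0 v u] by simp
      then show ?thesis unfolding E.SK_def e using True skew 0 by (simp add: ext_const module.scale_zero_right[OF msc])
    next
      case False
      then show ?thesis unfolding E.SK_def e using skew 0 by (simp add: ext_const pscale_pCons[OF msc])
    qed
  qed
qed

lemma PJ_base:
  assumes jac: "br u (br v w) = br (br u v) w + sc s (br v (br u w))"
  shows "E.PJ s [:u:] [:v:] [:w:]"
  unfolding E.PJ_def
proof (intro allI)
  fix k m n :: nat
  define z where "z = (k = 0 \<and> m = 0 \<and> n = 0)"
  have LU: "E.LU [:u:] [:v:] [:w:] k m n = (if z then [:br u (br v w):] else 0)"
  proof -
    have "E.LU [:u:] [:v:] [:w:] k m n = (\<Sum>i\<le>k. if i = 0 then (if z then [:br u (br v w):] else 0) else 0)"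
      unfolding E.LU_def by (intro sum.cong refl) (auto simp: ext_const z_def module.scale_one[OF mps])
    then show ?thesis by (simp add: sum.delta)
  qed
  have LV: "E.LV [:u:] [:v:] [:w:] k m n = (if z then [:br v (br u w):] else 0)"
  proof -
    have "E.LV [:u:] [:v:] [:w:] k m n = (\<Sum>i\<le>k. if i = 0 then (if z then [:br v (br u w):] else 0) else 0)"
      unfolding E.LV_def by (intro sum.cong refl) (auto simp: ext_const z_def module.scale_one[OF mps])
    then show ?thesis by (simp add: sum.delta)
  qed
  have RR: "E.RR [:u:] [:v:] [:w:] k m n = (if z then [:br (br u v) w:] else 0)"
  proof -
    have "E.RR [:u:] [:v:] [:w:] k m n = (\<Sum>i\<le>m. if i = 0 then (if z then [:br (br u v) w:] else 0) else 0)"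
      unfolding E.RR_def by (intro sum.cong refl) (auto simp: ext_const z_def module.scale_one[OF mps])
    then show ?thesis by (simp add: sum.delta)
  qed
  show "E.JJ s [:u:] [:v:] [:w:] k m n = 0"
    unfolding E.JJ_def LU LV RR using jac
    by (auto simp: z_def pscale_pCons[OF msc])
qed


lemma ext_par:
  assumes g: "graded_space sc S0 S1"
    and brp: "\<And>x y. x \<in> par S0 S1 p \<Longrightarrow> y \<in> par S0 S1 q \<Longrightarrow> br x y \<in> par S0 S1 (p \<noteq> q)"
    and A: "A \<in> polypar S0 S1 p" and B: "B \<in> polypar S0 S1 q"
  shows "extprod sc F n A B \<in> polypar S0 S1 (p \<noteq> q)"
  unfolding EP1
proof (intro module.subspace_sum[OF mps polypar_sub[OF g]])
  fix a b
  have "br (coeff A a) (coeff B b) \<in> par S0 S1 (p \<noteq> q)"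
    using A B brp unfolding polypar_def by blast
  then show "pscale sc (kk a b n) (monom (br (coeff A a) (coeff B b)) (a + b - n)) \<in> polypar S0 S1 (p \<noteq> q)"
    by (intro module.subspace_scale[OF mps polypar_sub[OF g]] monom_polypar[OF _ g])
qed

lemma skew_gen:
  assumes g: "graded_space sc S0 S1"
    and skb: "\<And>x y. x \<in> par S0 S1 p \<Longrightarrow> y \<in> par S0 S1 q \<Longrightarrow> br x y = - sc (eps p q) (br y x)"
    and A: "A \<in> polypar S0 S1 p" and B: "B \<in> polypar S0 S1 q"
    and M: "\<forall>k\<ge>M. extprod sc F (n + k) B A = 0"
  shows "extprod sc F n A B = - pscale sc (eps p q)
           (\<Sum>k<M. pscale sc ((-1) ^ (n + k) / of_nat (fact k)) ((Dop ^^ k) (extprod sc F (n + k) B A)))"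
proof -
  define K0 where "K0 = Suc (degree A + degree B)"
  have vanK0: "\<forall>j\<ge>K0. extprod sc F j B A = 0" using ext_vanish unfolding K0_def by auto
  have SK0: "E.SK (eps p q) A B n K0 = 0"
  proof (rule additive_ext2[where P="par S0 S1 p" and Q="par S0 S1 q" and \<Phi>="\<lambda>A B. E.SK (eps p q) A B n K0"])
    show "E.SK (eps p q) (x + y) B' n K0 = E.SK (eps p q) x B' n K0 + E.SK (eps p q) y B' n K0" for x y B'
      by (rule E.SK_add1)
    show "E.SK (eps p q) A' (x + y) n K0 = E.SK (eps p q) A' x n K0 + E.SK (eps p q) A' y n K0" for x y A'
      by (rule E.SK_add2)
    show "coeff A k \<in> par S0 S1 p" for k using A unfolding polypar_def by blast
    show "coeff B k \<in> par S0 S1 q" for k using B unfolding polypar_def by blast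
    fix u v a b assume u: "u \<in> par S0 S1 p" and v: "v \<in> par S0 S1 q" and a: "a \<le> degree A" and b: "b \<le> degree B"
    have ok: "E.SKOK (eps p q) (monom u a) (monom v b)"
      using E.SKOK_pow[OF SKOK_base[of u v "eps p q"], of a b] skb[OF u v] by (simp add: Dop_pow_const)
    have "\<forall>j\<ge>K0. extprod sc F j (monom v b) (monom u a) = 0"
    proof (intro allI impI ext_vanish)
      fix j assume "K0 \<le> j"
      moreover have "degree (monom v b) \<le> b" "degree (monom u a) \<le> a" by (simp_all add: degree_monom_le)
      ultimately show "degree (monom v b) + degree (monom u a) < j" using a b unfolding K0_def by linarith
    qed
    then show "E.SK (eps p q) (monom u a) (monom v b) n K0 = 0" using ok unfolding E.SKOK_def by blast
  qed
  define K' where "K' = max M K0"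
  have "E.SK (eps p q) A B n M = E.SK (eps p q) A B n K'"
    unfolding E.SK_def
    by (intro arg_cong2[where f="(+)"] refl arg_cong2[where f="pscale sc"] sum.mono_neutral_right[symmetric])
       (use M in \<open>auto simp: K'_def\<close>)
  also have "\<dots> = E.SK (eps p q) A B n K0"
    by (rule E.SK_cut[OF vanK0]) (simp add: K'_def)
  finally have "E.SK (eps p q) A B n M = 0" using SK0 by simp
  then show ?thesis unfolding E.SK_def E.cc_def by (simp add: eq_neg_iff_add_eq_0)
qed

lemma jac_gen:
  assumes jb: "\<And>x y z. x \<in> par S0 S1 p \<Longrightarrow> y \<in> par S0 S1 q \<Longrightarrow> z \<in> par S0 S1 r \<Longrightarrow>
        br x (br y z) = br (br x y) z + sc (eps p q) (br y (br x z))"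
    and A: "A \<in> polypar S0 S1 p" and B: "B \<in> polypar S0 S1 q" and C: "C \<in> polypar S0 S1 r"
  shows "E.JJ (eps p q) A B C k m n = 0"
proof (rule additive_ext2[where P="par S0 S1 p" and Q="par S0 S1 q" and \<Phi>="\<lambda>A B. E.JJ (eps p q) A B C k m n"])
  show "E.JJ (eps p q) (x + y) B' C k m n = E.JJ (eps p q) x B' C k m n + E.JJ (eps p q) y B' C k m n" for x y B'
    by (rule E.JJ_add1)
  show "E.JJ (eps p q) A' (x + y) C k m n = E.JJ (eps p q) A' x C k m n + E.JJ (eps p q) A' y C k m n" for x y A'
    by (rule E.JJ_add2)
  show "coeff A i \<in> par S0 S1 p" for i using A unfolding polypar_def by blast
  show "coeff B i \<in> par S0 S1 q" for i using B unfolding polypar_def by blast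
  fix u v a b assume u: "u \<in> par S0 S1 p" and v: "v \<in> par S0 S1 q"
  show "E.JJ (eps p q) (monom u a) (monom v b) C k m n = 0"
  proof (rule additive_ext[where P="par S0 S1 r" and \<Phi>="\<lambda>C. E.JJ (eps p q) (monom u a) (monom v b) C k m n"])
    show "E.JJ (eps p q) (monom u a) (monom v b) (x + y) k m n = E.JJ (eps p q) (monom u a) (monom v b) x k m n + E.JJ (eps p q) (monom u a) (monom v b) y k m n" for x y
      by (rule E.JJ_add3)
    show "coeff C i \<in> par S0 S1 r" for i using C unfolding polypar_def by blast
    fix w c assume w: "w \<in> par S0 S1 r"
    show "E.JJ (eps p q) (monom u a) (monom v b) (monom w c) k m n = 0"
      using E.PJ_pow[OF PJ_base[OF jb[OF u v w]], of a b c] unfolding E.PJ_def Dop_pow_const by simp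
  qed
qed

lemma VLA_of_Lie:
  assumes Lie: "Lie_superalgebra sc S0 S1 br"
  shows "vertex_Lie_superalgebra (pscale sc) (polypar S0 S1 False) (polypar S0 S1 True) Dop (extprod sc F)"
proof -
  have g: "graded_space sc S0 S1" using Lie unfolding Lie_superalgebra_def by simp
  have L: "\<And>p q r u v w. u \<in> par S0 S1 p \<Longrightarrow> v \<in> par S0 S1 q \<Longrightarrow> w \<in> par S0 S1 r \<Longrightarrow>
          br u v \<in> par S0 S1 (p \<noteq> q)
        \<and> br u v = - sc (eps p q) (br v u)
        \<and> br u (br v w) = br (br u v) w + sc (eps p q) (br v (br u w))"
    using Lie unfolding Lie_superalgebra_def by blast
  have z: "0 \<in> par S0 S1 r" for r using module.subspace_0[OF msc sub_par[OF g]] .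
  have brp: "br x y \<in> par S0 S1 (p \<noteq> q)" if "x \<in> par S0 S1 p" "y \<in> par S0 S1 q" for x y p q
    using L[OF that z] by blast
  have skb: "br x y = - sc (eps p q) (br y x)" if "x \<in> par S0 S1 p" "y \<in> par S0 S1 q" for x y p q
    using L[OF that z] by blast
  have jb: "br x (br y w) = br (br x y) w + sc (eps p q) (br y (br x w))"
    if "x \<in> par S0 S1 p" "y \<in> par S0 S1 q" "w \<in> par S0 S1 r" for x y w p q r
    using L[OF that] by blast
  have Dpar: "Dop x \<in> polypar S0 S1 p" if "x \<in> polypar S0 S1 p" for x p
    using that z unfolding polypar_def Dop_def by (auto simp: coeff_pCons split: nat.splits)
  show ?thesis
    unfolding vertex_Lie_superalgebra_def par_polypar
  proof (intro conjI allI impI)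
    show "graded_space (pscale sc) (polypar S0 S1 False) (polypar S0 S1 True)" by (rule graded_poly[OF g])
    show "Dop (x + y) = Dop x + Dop y" for x y by (rule Dop_add)
    show "Dop (pscale sc c x) = pscale sc c (Dop x)" for c x by (rule Dop_pscale[OF msc])
    show "Dop x \<in> polypar S0 S1 p" if "x \<in> polypar S0 S1 p" for x p using Dpar[OF that] .
    show "bilinear_map (pscale sc) (pscale sc) (extprod sc F n)" for n
      unfolding bilinear_map_def by (simp add: ext_addL ext_addR ext_scL ext_scR)
    fix p q u v assume u: "u \<in> polypar S0 S1 p" and v: "v \<in> polypar S0 S1 q"
    show "\<exists>N. \<forall>n\<ge>N. extprod sc F n u v = 0" by (rule ext_nilp)
    show "extprod sc F n u v \<in> polypar S0 S1 (p \<noteq> q)" for n by (rule ext_par[OF g brp u v])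
    show "extprod sc F 0 (Dop u) v = 0" by (simp add: ext_D)
    show "extprod sc F (Suc n) (Dop u) v = - pscale sc (of_nat (Suc n)) (extprod sc F n u v)" for n
      by (simp add: ext_D)
    show "Dop (extprod sc F n u v) = extprod sc F n (Dop u) v + extprod sc F n u (Dop v)" for n
      by (rule Dop_ext)
    show "extprod sc F n u v = - pscale sc (eps p q)
           (\<Sum>k<M. pscale sc ((-1) ^ (n + k) / of_nat (fact k)) ((Dop ^^ k) (extprod sc F (n + k) v u)))"
      if "\<forall>k\<ge>M. extprod sc F (n + k) v u = 0" for n M
      by (rule skew_gen[OF g skb u v that])
    fix r w k m n assume w: "w \<in> polypar S0 S1 r"
    have "E.JJ (eps p q) u v w k m n = 0" by (rule jac_gen[OF jb u v w])
    then show "(\<Sum>i\<le>k. pscale sc ((-1) ^ i * of_nat (k choose i))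
                 (extprod sc F (m + k - i) u (extprod sc F (n + i) v w)
                  - pscale sc (eps p q * (-1) ^ k) (extprod sc F (n + k - i) v (extprod sc F (m + i) u w))))
             = (\<Sum>i\<le>m. pscale sc (of_nat (m choose i)) (extprod sc F (m + n - i) (extprod sc F (k + i) u v) w))"
      using E.JJ_eq[where s="eps p q" and k=k and m=m and n=n and u=u and v=v and w=w] by simp
  qed
qed

end


lemma ext_const_gen:
  assumes m: "module sc"
  shows "extprod sc F n [:u:] [:v:] = F n u v"
proof -
  have "extprod sc F n [:u:] [:v:] = pscale sc 1 (F n u v)"
    unfolding extprod_def by simp
  then show ?thesis using module.scale_one[OF module_pscale[OF m]] by simp
qed

lemma sc_cancel: fixes sc :: "complex \<Rightarrow> 'a::ab_group_add \<Rightarrow> 'a"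
  shows "module sc \<Longrightarrow> c \<noteq> 0 \<Longrightarrow> sc c x = 0 \<Longrightarrow> x = 0"
proof -
  assume m: "module sc" and c: "c \<noteq> 0" and h: "sc c x = 0"
  have "x = sc ((1 / c) * c) x" using c module.scale_one[OF m, of x] by simp
  also have "\<dots> = sc (1 / c) (sc c x)" using module.scale_scale[OF m] by simp
  also have "\<dots> = 0" using h module.scale_zero_right[OF m] by simp
  finally show "x = 0" .
qed

lemma eps_nz: "eps p q \<noteq> 0" by (simp add: eps_def)

theorem proposition7p6:
  fixes sc :: "complex \<Rightarrow> 'a::ab_group_add \<Rightarrow> 'a"
    and S0 S1 :: "'a set"
    and F :: "nat \<Rightarrow> 'a \<Rightarrow> 'a \<Rightarrow> 'a poly"
  assumes "is_formula sc S0 S1 F"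
    and "\<forall>n u v. degree (F n u v) = 0"
  shows "vertex_Lie_superalgebra (pscale sc) (polypar S0 S1 False) (polypar S0 S1 True) Dop (extprod sc F)
     \<longleftrightarrow> (\<forall>n\<ge>1. \<forall>u v. F n u v = 0) \<and> Lie_superalgebra sc S0 S1 (\<lambda>u v. coeff (F 0 u v) 0)"
proof -
  define br where "br u v = coeff (F 0 u v) 0" for u v
  have g: "graded_space sc S0 S1" and Fbil: "\<And>n. bilinear_map sc (pscale sc) (F n)"
    and Fpar: "\<And>n p q u v. u \<in> par S0 S1 p \<Longrightarrow> v \<in> par S0 S1 q \<Longrightarrow> F n u v \<in> polypar S0 S1 (p \<noteq> q)"
    and Fnil: "\<And>u v. \<exists>N. \<forall>n\<ge>N. F n u v = 0"
    using assms(1) unfolding is_formula_def by blast+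
  have msc: "module sc" using g unfolding graded_space_def by simp
  have Fc: "F n u v = [:coeff (F n u v) 0:]" for n u v using degree_0_id[of "F n u v"] assms(2) by simp
  have Fadd: "F n (x + y) z = F n x z + F n y z" "F n z (x + y) = F n z x + F n z y" for n x y z
    using Fbil[of n] unfolding bilinear_map_def by blast+
  have brbil: "bilinear_map sc sc br"
    using Fbil[of 0] unfolding bilinear_map_def br_def by (simp add: coeff_pscale[OF msc])
  have z: "0 \<in> par S0 S1 r" for r using module.subspace_0[OF msc sub_par[OF g]] .
  have Fc0: "F 0 u v = [:br u v:]" for u v using Fc[of 0 u v] unfolding br_def .
  show ?thesis
  proof
    assume V: "vertex_Lie_superalgebra (pscale sc) (polypar S0 S1 False) (polypar S0 S1 True) Dop (extprod sc F)"
    have VV: "(\<forall>n M. (\<forall>k\<ge>M. extprod sc F (n + k) v u = 0) \<longrightarrow>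
             extprod sc F n u v = - pscale sc (eps p q)
               (\<Sum>k<M. pscale sc ((-1) ^ (n + k) / of_nat (fact k)) ((Dop ^^ k) (extprod sc F (n + k) v u))))
        \<and> (\<forall>r w k m n. w \<in> polypar S0 S1 r \<longrightarrow>
             (\<Sum>i\<le>k. pscale sc ((-1) ^ i * of_nat (k choose i))
                 (extprod sc F (m + k - i) u (extprod sc F (n + i) v w)
                  - pscale sc (eps p q * (-1) ^ k) (extprod sc F (n + k - i) v (extprod sc F (m + i) u w))))
             = (\<Sum>i\<le>m. pscale sc (of_nat (m choose i)) (extprod sc F (m + n - i) (extprod sc F (k + i) u v) w)))"
      if "u \<in> polypar S0 S1 p" "v \<in> polypar S0 S1 q" for p q u v
      using V[unfolded vertex_Lie_superalgebra_def par_polypar, THEN conjunct2, THEN conjunct2, THEN conjunct2,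
          THEN conjunct2, THEN conjunct2, THEN spec[of _ p], THEN spec[of _ q], THEN spec[of _ u], THEN spec[of _ v],
          THEN mp, OF that(1), THEN mp, OF that(2), THEN conjunct2, THEN conjunct2, THEN conjunct2, THEN conjunct2, THEN conjunct2] .
    have Fz_hom: "F n v u = 0" if u: "u \<in> par S0 S1 p" and v: "v \<in> par S0 S1 q" and n: "n \<ge> 1" for u v p q n
    proof (rule ccontr)
      assume nz: "F n v u \<noteq> 0"
      define S where "S = {n. n \<ge> 1 \<and> F n v u \<noteq> 0}"
      obtain N where N: "\<forall>n\<ge>N. F n v u = 0" using Fnil by blast
      have fin: "finite S"
      proof (rule finite_subset[of _ "{..N}"])
        show "S \<subseteq> {..N}"
        proof
          fix x assume "x \<in> S"
          then have "F x v u \<noteq> 0" by (simp add: S_def)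
          then have "\<not> x \<ge> N" using N by blast
          then show "x \<in> {..N}" by simp
        qed
      qed simp
      define T where "T = Max S"
      have TS: "T \<in> S" using fin nz n unfolding T_def S_def by (intro Max_in) auto
      then have T1: "T \<ge> 1" and Tnz: "F T v u \<noteq> 0" unfolding S_def by auto
      have Tmax: "F j v u = 0" if "j > T" for j
        using Max_ge[OF fin, of j] that unfolding T_def S_def by (cases "j \<ge> 1") auto
      have U: "[:u:] \<in> polypar S0 S1 p" and VP: "[:v:] \<in> polypar S0 S1 q"
        using const_polypar[OF g] u v by blast+
      have van: "\<forall>k\<ge>2. extprod sc F (T - 1 + k) [:v:] [:u:] = 0"
        using Tmax T1 by (simp add: ext_const_gen[OF msc])
      have e: "F (T - 1) u v = - pscale sc (eps p q)
               (\<Sum>k<2. pscale sc ((-1) ^ (T - 1 + k) / of_nat (fact k)) ((Dop ^^ k) (F (T - 1 + k) v u)))"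
        using conjunct1[OF VV[OF U VP], THEN spec, THEN spec, THEN mp, OF van] unfolding ext_const_gen[OF msc] .
      have c1: "coeff (F (T - 1) u v) 1 = 0" by (rule coeff_eq_0) (simp add: assms(2))
      have c2: "coeff (F (T - 1) v u) 1 = 0" by (rule coeff_eq_0) (simp add: assms(2))
      have TT: "T - 1 + 1 = T" using T1 by simp
      define c0 :: complex where "c0 = (-1) ^ (T - 1 + 0) / of_nat (fact 0)"
      define c1' :: complex where "c1' = (-1) ^ (T - 1 + 1) / of_nat (fact 1)"
      have s2: "(\<Sum>k<2. f k) = f 0 + f 1" for f :: "nat \<Rightarrow> 'a poly" by (simp add: numeral_2_eq_2)
      have e2: "F (T - 1) u v = - pscale sc (eps p q) (pscale sc c0 (F (T - 1 + 0) v u) + pscale sc c1' (Dop (F (T - 1 + 1) v u)))"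
        using e unfolding s2 c0_def c1'_def by simp
      have "coeff (F (T - 1) u v) 1 = - sc (eps p q) (sc c0 (coeff (F (T - 1) v u) 1) + sc c1' (coeff (F T v u) 0))"
        unfolding arg_cong[OF e2, of "\<lambda>X. coeff X 1"] TT
        by (simp add: coeff_pscale[OF msc] module.scale_right_distrib[OF msc] Dop_def)
      then have "sc (eps p q) (sc c1' (coeff (F T v u) 0)) = 0"
        unfolding c1 c2 by (simp add: module.scale_zero_right[OF msc])
      then have "sc c1' (coeff (F T v u) 0) = 0" by (rule sc_cancel[OF msc eps_nz])
      moreover have "c1' \<noteq> 0" unfolding c1'_def by simp
      ultimately have "coeff (F T v u) 0 = 0" using sc_cancel[OF msc] by blast
      then have "[:coeff (F T v u) 0:] = 0" by simp
      then have "F T v u = 0" using Fc[of T v u] by (simp only:)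
      then show False using Tnz by simp
    qed
    have Fz: "\<forall>n\<ge>1. \<forall>u v. F n u v = 0"
    proof (intro allI impI)
      fix n :: nat and u v :: 'a assume n: "1 \<le> n"
      obtain u0 u1 where u: "u0 \<in> S0" "u1 \<in> S1" "u = u0 + u1" using g unfolding graded_space_def by blast
      obtain v0 v1 where v: "v0 \<in> S0" "v1 \<in> S1" "v = v0 + v1" using g unfolding graded_space_def by blast
      have P0: "x \<in> par S0 S1 False" if "x \<in> S0" for x using that by (simp add: par_def)
      have P1: "x \<in> par S0 S1 True" if "x \<in> S1" for x using that by (simp add: par_def)
      have "F n u0 v0 = 0" "F n u0 v1 = 0" "F n u1 v0 = 0" "F n u1 v1 = 0"
        using Fz_hom[OF P0 P0 n] Fz_hom[OF P1 P0 n] Fz_hom[OF P0 P1 n] Fz_hom[OF P1 P1 n] u v by auto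
      then show "F n u v = 0" using u v by (simp add: Fadd)
    qed
    have Lie: "Lie_superalgebra sc S0 S1 br"
      unfolding Lie_superalgebra_def
    proof (intro conjI allI impI g brbil)
      fix p q r u v w assume u: "u \<in> par S0 S1 p" and v: "v \<in> par S0 S1 q" and w: "w \<in> par S0 S1 r"
      have U: "[:u:] \<in> polypar S0 S1 p" and VP: "[:v:] \<in> polypar S0 S1 q" and W: "[:w:] \<in> polypar S0 S1 r"
        using const_polypar[OF g] u v w by blast+
      show "br u v \<in> par S0 S1 (p \<noteq> q)"
        using Fpar[OF u v, of 0] unfolding br_def polypar_def by blast
      have van: "\<forall>k\<ge>1. extprod sc F (0 + k) [:v:] [:u:] = 0"
        using Fz by (simp add: ext_const_gen[OF msc])
      have "extprod sc F 0 [:u:] [:v:] = - pscale sc (eps p q)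
               (\<Sum>k<1. pscale sc ((-1) ^ (0 + k) / of_nat (fact k)) ((Dop ^^ k) (extprod sc F (0 + k) [:v:] [:u:])))"
        by (rule conjunct1[OF VV[OF U VP], THEN spec, THEN spec, THEN mp, OF van])
      then have "[:br u v:] = - pscale sc (eps p q) [:br v u:]"
        by (simp add: ext_const_gen[OF msc] Fc0 module.scale_one[OF module_pscale[OF msc]])
      then show "br u v = - sc (eps p q) (br v u)"
        by (simp add: pscale_pCons[OF msc])
      have "(\<Sum>i\<le>0. pscale sc ((-1) ^ i * of_nat (0 choose i))
                 (extprod sc F (0 + 0 - i) [:u:] (extprod sc F (0 + i) [:v:] [:w:])
                  - pscale sc (eps p q * (-1) ^ 0) (extprod sc F (0 + 0 - i) [:v:] (extprod sc F (0 + i) [:u:] [:w:]))))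
             = (\<Sum>i\<le>0. pscale sc (of_nat (0 choose i)) (extprod sc F (0 + 0 - i) (extprod sc F (0 + i) [:u:] [:v:]) [:w:]))"
        by (rule conjunct2[OF VV[OF U VP], THEN spec, THEN spec, THEN spec, THEN spec, THEN spec, THEN mp, OF W])
      then have "[:br u (br v w):] - pscale sc (eps p q) [:br v (br u w):] = [:br (br u v) w:]"
        by (simp add: ext_const_gen[OF msc] Fc0 module.scale_one[OF module_pscale[OF msc]])
      then have "br u (br v w) - sc (eps p q) (br v (br u w)) = br (br u v) w"
        by (simp add: pscale_pCons[OF msc])
      then show "br u (br v w) = br (br u v) w + sc (eps p q) (br v (br u w))"
        by (simp add: algebra_simps)
    qed
    show "(\<forall>n\<ge>1. \<forall>u v. F n u v = 0) \<and> Lie_superalgebra sc S0 S1 (\<lambda>u v. coeff (F 0 u v) 0)"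
      using Fz Lie unfolding br_def by simp
  next
    assume H: "(\<forall>n\<ge>1. \<forall>u v. F n u v = 0) \<and> Lie_superalgebra sc S0 S1 (\<lambda>u v. coeff (F 0 u v) 0)"
    have Fform: "F n u v = (if n = 0 then [:br u v:] else 0)" for n u v
    proof (cases n)
      case 0 then show ?thesis using Fc0[of u v] by simp
    next
      case (Suc n') then show ?thesis using H by simp
    qed
    have Lie: "Lie_superalgebra sc S0 S1 br" using H unfolding br_def by simp
    show "vertex_Lie_superalgebra (pscale sc) (polypar S0 S1 False) (polypar S0 S1 True) Dop (extprod sc F)"
      by (rule VLA_of_Lie[OF msc brbil Fform Lie])
  qed
qed

end
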